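(* The normed space $(\mathcal{LP}[0,1],\|\cdot\|_{[0,1]})$ is not complete.
   Context: Laplace integral on $[a,b]$: with lower/upper Laplace derivates $\underline{LD}_1F(x)$, $\overline{LD}_1F(x)$ being the minimum of the $\liminf$'s, resp. maximum of the $\limsup$'s, as $s\to\infty$ of $s^2\int_0^\delta e^{-st}[F(x+t)-F(x)]dt$ and $(-s^2)\int_0^\delta e^{-st}[F(x-t)-F(x)]dt$ (one-sided at endpoints), a major function of $f$ is a continuous $U$ with $\underline{LD}_1U\geqslant f$, $\underline{LD}_1U>-\infty$ everywhere on $[a,b]$, a minor function a continuous $V$ with $\overline{LD}_1V\leqslant f$, $\overline{LD}_1V<\infty$ everywhere, and $f$ is Laplace integrable if $\sup_V(V(b)-V(a))=\inf_U(U(b)-U(a))$ is finite, this value being $\int_a^bf$. $\mathcal{LP}[a,b]$ denotes the space of Laplace integrable functions on $[a,b]$ modulo equality almost everywhere, with the Alexiewicz norm $\|f\|_{[a,b]}=\sup_{x\in[a,b]}\left|\int_a^xf\right|$. *)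

theory Defs
  imports "HOL-Analysis.Analysis"
begin

definition lap_right :: "(real \<Rightarrow> real) \<Rightarrow> real \<Rightarrow> real \<Rightarrow> real \<Rightarrow> real" where
  "lap_right F x \<delta> s = s\<^sup>2 * integral {0..\<delta>} (\<lambda>t. exp (- s * t) * (F (x + t) - F x))"

definition lap_left :: "(real \<Rightarrow> real) \<Rightarrow> real \<Rightarrow> real \<Rightarrow> real \<Rightarrow> real" where
  "lap_left F x \<delta> s = - (s\<^sup>2) * integral {0..\<delta>} (\<lambda>t. exp (- s * t) * (F (x - t) - F x))"

definition lower_LD :: "real \<Rightarrow> real \<Rightarrow> (real \<Rightarrow> real) \<Rightarrow> real \<Rightarrow> ereal" where
  "lower_LD a b F x =
     (let R = Liminf at_top (\<lambda>s. ereal (lap_right F x (b - x) s));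
          L = Liminf at_top (\<lambda>s. ereal (lap_left F x (x - a) s))
      in if x = a then R else if x = b then L else min R L)"

definition upper_LD :: "real \<Rightarrow> real \<Rightarrow> (real \<Rightarrow> real) \<Rightarrow> real \<Rightarrow> ereal" where
  "upper_LD a b F x =
     (let R = Limsup at_top (\<lambda>s. ereal (lap_right F x (b - x) s));
          L = Limsup at_top (\<lambda>s. ereal (lap_left F x (x - a) s))
      in if x = a then R else if x = b then L else max R L)"

definition major_fun :: "real \<Rightarrow> real \<Rightarrow> (real \<Rightarrow> real) \<Rightarrow> (real \<Rightarrow> real) \<Rightarrow> bool" where
  "major_fun a b f U \<longleftrightarrow> continuous_on {a..b} U \<and>
     (\<forall>x\<in>{a..b}. lower_LD a b U x \<ge> ereal (f x) \<and> lower_LD a b U x > -\<infinity>)"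

definition minor_fun :: "real \<Rightarrow> real \<Rightarrow> (real \<Rightarrow> real) \<Rightarrow> (real \<Rightarrow> real) \<Rightarrow> bool" where
  "minor_fun a b f V \<longleftrightarrow> continuous_on {a..b} V \<and>
     (\<forall>x\<in>{a..b}. upper_LD a b V x \<le> ereal (f x) \<and> upper_LD a b V x < \<infinity>)"

definition lap_upper :: "real \<Rightarrow> real \<Rightarrow> (real \<Rightarrow> real) \<Rightarrow> ereal" where
  "lap_upper a b f = (INF U\<in>{U. major_fun a b f U}. ereal (U b - U a))"

definition lap_lower :: "real \<Rightarrow> real \<Rightarrow> (real \<Rightarrow> real) \<Rightarrow> ereal" where
  "lap_lower a b f = (SUP V\<in>{V. minor_fun a b f V}. ereal (V b - V a))"

definition LP_integrable :: "real \<Rightarrow> real \<Rightarrow> (real \<Rightarrow> real) \<Rightarrow> bool" where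
  "LP_integrable a b f \<longleftrightarrow> lap_lower a b f = lap_upper a b f \<and> \<bar>lap_upper a b f\<bar> \<noteq> \<infinity>"

definition LP_integral :: "real \<Rightarrow> real \<Rightarrow> (real \<Rightarrow> real) \<Rightarrow> real" where
  "LP_integral a b f = real_of_ereal (lap_upper a b f)"

text \<open>Alexiewicz norm on [a,b]: sup over x in [a,b] of |int_a^x f|; the term
  x = a contributes 0, so we take the supremum over {a} (value 0) and (a,b].\<close>
definition alex_norm :: "real \<Rightarrow> real \<Rightarrow> (real \<Rightarrow> real) \<Rightarrow> real" where
  "alex_norm a b f = (SUP x\<in>{a..b}. (if x = a then 0 else \<bar>LP_integral a x f\<bar>))"

end

theory Submission
  imports Defs
begin


lemma K0:
  fixes s d :: real
  assumes "s > 0" "d \<ge> 0"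
  shows "((\<lambda>t. exp (- s * t)) has_integral (1 - exp (- s * d)) / s) {0..d}"
proof -
  have "((\<lambda>t. exp (- s * t)) has_integral ((- exp (- s * d) / s) - (- exp (- s * 0) / s))) {0..d}"
    apply (rule fundamental_theorem_of_calculus)
    using assms apply simp
    using assms
    by (auto intro!: derivative_eq_intros simp: has_real_derivative_iff_has_vector_derivative[symmetric] field_simps)
  then show ?thesis by (rule has_integral_eq_rhs) (use assms in \<open>simp add: field_simps\<close>)
qed

lemma K1:
  fixes s d :: real
  assumes "s > 0" "d \<ge> 0"
  shows "((\<lambda>t. exp (- s * t) * t) has_integral (1 - exp (- s * d) * (1 + s * d)) / s^2) {0..d}"
proof -
  have "((\<lambda>t. exp (- s * t) * t) has_integral ((- exp (- s * d) * (d / s + 1 / s^2)) - (- exp (- s * 0) * (0 / s + 1 / s^2)))) {0..d}"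
    apply (rule fundamental_theorem_of_calculus)
    using assms apply simp
    using assms
    by (auto intro!: derivative_eq_intros simp: has_real_derivative_iff_has_vector_derivative[symmetric] field_simps power2_eq_square)
  then show ?thesis by (rule has_integral_eq_rhs) (use assms in \<open>simp add: field_simps power2_eq_square\<close>)
qed

lemma K2:
  fixes s d :: real
  assumes "s > 0" "d \<ge> 0"
  shows "((\<lambda>t. exp (- s * t) * t^2) has_integral (2 - exp (- s * d) * (s^2 * d^2 + 2 * s * d + 2)) / s^3) {0..d}"
proof -
  have "((\<lambda>t. exp (- s * t) * t^2) has_integral ((- exp (- s * d) * (d^2 / s + 2 * d / s^2 + 2 / s^3)) - (- exp (- s * 0) * (0^2 / s + 2*0 / s^2 + 2 / s^3)))) {0..d}"
    apply (rule fundamental_theorem_of_calculus)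
    using assms apply simp
    using assms
    by (auto intro!: derivative_eq_intros simp: has_real_derivative_iff_has_vector_derivative[symmetric] field_simps power2_eq_square power3_eq_cube)
  then show ?thesis by (rule has_integral_eq_rhs) (use assms in \<open>simp add: field_simps power2_eq_square power3_eq_cube\<close>)
qed



lemma cont_shift_r:
  fixes F :: "real \<Rightarrow> real"
  assumes "continuous_on {x..x+d} F"
  shows "continuous_on {0..d} (\<lambda>t. F (x + t))"
proof -
  have "continuous_on {0..d} (\<lambda>t. x + t)" by (intro continuous_intros)
  moreover have "(\<lambda>t. x + t) ` {0..d} \<subseteq> {x..x+d}" by auto
  ultimately show ?thesis using continuous_on_compose2[OF assms] by blast
qed

lemma cont_shift_l:
  fixes F :: "real \<Rightarrow> real"
  assumes "continuous_on {x-d..x} F"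
  shows "continuous_on {0..d} (\<lambda>t. F (x - t))"
proof -
  have "continuous_on {0..d} (\<lambda>t. x - t)" by (intro continuous_intros)
  moreover have "(\<lambda>t. x - t) ` {0..d} \<subseteq> {x-d..x}" by auto
  ultimately show ?thesis using continuous_on_compose2[OF assms] by blast
qed

lemma int_r:
  fixes F :: "real \<Rightarrow> real"
  assumes "continuous_on {x..x+d} F"
  shows "(\<lambda>t. exp (- s * t) * (F (x + t) - F x)) integrable_on {0..d}"
  by (intro integrable_continuous_interval continuous_intros cont_shift_r assms)

lemma int_l:
  fixes F :: "real \<Rightarrow> real"
  assumes "continuous_on {x-d..x} F"
  shows "(\<lambda>t. exp (- s * t) * (F (x - t) - F x)) integrable_on {0..d}"
  by (intro integrable_continuous_interval continuous_intros cont_shift_l assms)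

lemma lap_right_diff:
  assumes "continuous_on {x..x+d} F" "continuous_on {x..x+d} G"
  shows "lap_right (\<lambda>y. F y - G y) x d s = lap_right F x d s - lap_right G x d s"
proof -
  have "integral {0..d} (\<lambda>t. exp (- s * t) * ((F (x + t) - G (x + t)) - (F x - G x)))
     = integral {0..d} (\<lambda>t. exp (- s * t) * (F (x + t) - F x) - exp (- s * t) * (G (x + t) - G x))"
    by (simp add: algebra_simps)
  also have "\<dots> = integral {0..d} (\<lambda>t. exp (- s * t) * (F (x + t) - F x)) - integral {0..d} (\<lambda>t. exp (- s * t) * (G (x + t) - G x))"
    by (intro integral_diff int_r assms)
  finally have e: "integral {0..d} (\<lambda>t. exp (- s * t) * ((F (x + t) - G (x + t)) - (F x - G x))) = integral {0..d} (\<lambda>t. exp (- s * t) * (F (x + t) - F x)) - integral {0..d} (\<lambda>t. exp (- s * t) * (G (x + t) - G x))" .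
  show ?thesis unfolding lap_right_def by (simp only: e right_diff_distrib[symmetric])
qed

lemma lap_left_diff:
  assumes "continuous_on {x-d..x} F" "continuous_on {x-d..x} G"
  shows "lap_left (\<lambda>y. F y - G y) x d s = lap_left F x d s - lap_left G x d s"
proof -
  have "integral {0..d} (\<lambda>t. exp (- s * t) * ((F (x - t) - G (x - t)) - (F x - G x)))
     = integral {0..d} (\<lambda>t. exp (- s * t) * (F (x - t) - F x) - exp (- s * t) * (G (x - t) - G x))"
    by (simp add: algebra_simps)
  also have "\<dots> = integral {0..d} (\<lambda>t. exp (- s * t) * (F (x - t) - F x)) - integral {0..d} (\<lambda>t. exp (- s * t) * (G (x - t) - G x))"
    by (intro integral_diff int_l assms)
  finally have e: "integral {0..d} (\<lambda>t. exp (- s * t) * ((F (x - t) - G (x - t)) - (F x - G x))) = integral {0..d} (\<lambda>t. exp (- s * t) * (F (x - t) - F x)) - integral {0..d} (\<lambda>t. exp (- s * t) * (G (x - t) - G x))" .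
  show ?thesis unfolding lap_left_def by (simp only: e right_diff_distrib[symmetric])
qed

lemma lap_right_uminus: "lap_right (\<lambda>y. - F y) x d s = - lap_right F x d s"
proof -
  have "(\<lambda>t. exp (- s * t) * (- F (x + t) - - F x)) = (\<lambda>t. - (exp (- s * t) * (F (x + t) - F x)))"
    by (simp add: algebra_simps)
  then show ?thesis unfolding lap_right_def by simp
qed

lemma lap_left_uminus: "lap_left (\<lambda>y. - F y) x d s = - lap_left F x d s"
proof -
  have "(\<lambda>t. exp (- s * t) * (- F (x - t) - - F x)) = (\<lambda>t. - (exp (- s * t) * (F (x - t) - F x)))"
    by (simp add: algebra_simps)
  then show ?thesis unfolding lap_left_def by simp
qed

lemma lap_right_add:
  assumes "continuous_on {x..x+d} F" "continuous_on {x..x+d} G"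
  shows "lap_right (\<lambda>y. F y + G y) x d s = lap_right F x d s + lap_right G x d s"
proof -
  have "continuous_on {x..x+d} (\<lambda>y. - G y)" by (intro continuous_intros assms)
  from lap_right_diff[OF assms(1) this, of s] show ?thesis by (simp add: lap_right_uminus)
qed

lemma lap_right_cmult:
  "lap_right (\<lambda>y. c * F y) x d s = c * lap_right F x d s"
proof -
  have "(\<lambda>t. exp (- s * t) * (c * F (x + t) - c * F x)) = (\<lambda>t. c * (exp (- s * t) * (F (x + t) - F x)))"
    by (simp add: algebra_simps)
  then show ?thesis unfolding lap_right_def by simp
qed

definition kap :: "real \<Rightarrow> real \<Rightarrow> real" where
  "kap s d = 1 - exp (- s * d) * (1 + s * d)"

lemma lap_right_id: 
  assumes "s > 0" "d \<ge> 0"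
  shows "lap_right (\<lambda>y. y) x d s = kap s d"
proof -
  have "integral {0..d} (\<lambda>t. exp (- s * t) * ((x + t) - x)) = integral {0..d} (\<lambda>t. exp (- s * t) * t)"
    by simp
  also have "\<dots> = (1 - exp (- s * d) * (1 + s * d)) / s^2" using K1[OF assms] by blast
  finally show ?thesis using assms unfolding lap_right_def kap_def by simp
qed

lemma kap_bounds:
  assumes "s > 0" "d \<ge> 0"
  shows "0 \<le> kap s d" "kap s d \<le> 1"
proof -
  have "1 + s * d \<le> exp (s * d)" by (rule exp_ge_add_one_self)
  then have "exp (- s * d) * (1 + s * d) \<le> exp (- s * d) * exp (s * d)" by (intro mult_left_mono) auto
  also have "\<dots> = 1" by (simp add: exp_minus field_simps)
  finally show "0 \<le> kap s d" unfolding kap_def by simp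
  show "kap s d \<le> 1" unfolding kap_def using assms by simp
qed

lemma kap_lim:
  assumes "d > 0"
  shows "((\<lambda>s. kap s d) \<longlongrightarrow> 1) at_top"
  unfolding kap_def using assms by real_asymp



lemma I_bounds:
  fixes s d :: real
  assumes "s > 0" "d \<ge> 0"
  shows "integral {0..d} (\<lambda>t. exp (- s * t)) \<le> 1 / s"
    "integral {0..d} (\<lambda>t. exp (- s * t) * t) \<le> 1 / s^2"
    "integral {0..d} (\<lambda>t. exp (- s * t) * t^2) \<le> 2 / s^3"
proof -
  have e0: "exp (- s * d) \<ge> 0" by simp
  have "integral {0..d} (\<lambda>t. exp (- s * t)) = (1 - exp (- s * d)) / s" using K0[OF assms] by blast
  also have "\<dots> \<le> 1 / s" using assms e0 by (intro divide_right_mono) auto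
  finally show "integral {0..d} (\<lambda>t. exp (- s * t)) \<le> 1 / s" .
  have "integral {0..d} (\<lambda>t. exp (- s * t) * t) = (1 - exp (- s * d) * (1 + s * d)) / s^2" using K1[OF assms] by blast
  also have "\<dots> \<le> 1 / s^2" using assms e0 by (intro divide_right_mono) auto
  finally show "integral {0..d} (\<lambda>t. exp (- s * t) * t) \<le> 1 / s^2" .
  have "integral {0..d} (\<lambda>t. exp (- s * t) * t^2) = (2 - exp (- s * d) * (s^2 * d^2 + 2 * s * d + 2)) / s^3" using K2[OF assms] by blast
  also have "\<dots> \<le> 2 / s^3" using assms e0 by (intro divide_right_mono) auto
  finally show "integral {0..d} (\<lambda>t. exp (- s * t) * t^2) \<le> 2 / s^3" .
qed

lemma bnd_gen:
  fixes H :: "real \<Rightarrow> real"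
  assumes H: "continuous_on {0..d} H" and s: "s > 0" and d: "d \<ge> 0"
    and abc: "a \<ge> 0" "b \<ge> 0" "c \<ge> 0"
    and bnd: "\<And>t. t \<in> {0..d} \<Longrightarrow> \<bar>H t\<bar> \<le> a + b * t + c * t^2"
  shows "\<bar>s^2 * integral {0..d} (\<lambda>t. exp (- s * t) * H t)\<bar> \<le> a * s + b + 2 * c / s"
proof -
  define g where "g = (\<lambda>t. a * exp (- s * t) + b * (exp (- s * t) * t) + c * (exp (- s * t) * t^2))"
  have i0: "(\<lambda>t. exp (- s * t)) integrable_on {0..d}" using K0[OF s d] by blast
  have i1: "(\<lambda>t. exp (- s * t) * t) integrable_on {0..d}" using K1[OF s d] by blast
  have i2: "(\<lambda>t. exp (- s * t) * t^2) integrable_on {0..d}" using K2[OF s d] by blast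
  have gi: "g integrable_on {0..d}" unfolding g_def
    by (intro integrable_add integrable_on_mult_right i0 i1 i2)
  have ig: "integral {0..d} g = a * integral {0..d} (\<lambda>t. exp (- s * t)) + b * integral {0..d} (\<lambda>t. exp (- s * t) * t) + c * integral {0..d} (\<lambda>t. exp (- s * t) * t^2)"
    unfolding g_def by (intro integral_unique has_integral_add has_integral_mult_right integrable_integral i0 i1 i2)
  have fi: "(\<lambda>t. exp (- s * t) * H t) integrable_on {0..d}"
    by (intro integrable_continuous_interval continuous_intros H)
  have "norm (integral {0..d} (\<lambda>t. exp (- s * t) * H t)) \<le> integral {0..d} g"
  proof (rule integral_norm_bound_integral[OF fi gi])
    fix t assume t: "t \<in> {0..d}"
    have "norm (exp (- s * t) * H t) = exp (- s * t) * \<bar>H t\<bar>" by (simp add: abs_mult)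
    also have "\<dots> \<le> exp (- s * t) * (a + b * t + c * t^2)" using bnd[OF t] by (intro mult_left_mono) auto
    also have "\<dots> = g t" unfolding g_def by (simp add: algebra_simps)
    finally show "norm (exp (- s * t) * H t) \<le> g t" .
  qed
  also have "\<dots> \<le> a * (1 / s) + b * (1 / s^2) + c * (2 / s^3)"
    unfolding ig using I_bounds[OF s d] abc by (intro add_mono mult_left_mono) auto
  finally have "\<bar>integral {0..d} (\<lambda>t. exp (- s * t) * H t)\<bar> \<le> a * (1 / s) + b * (1 / s^2) + c * (2 / s^3)" by simp
  then have "s^2 * \<bar>integral {0..d} (\<lambda>t. exp (- s * t) * H t)\<bar> \<le> s^2 * (a * (1 / s) + b * (1 / s^2) + c * (2 / s^3))"
    by (intro mult_left_mono) auto
  also have "\<dots> = a * s + b + 2 * c / s" using s by (simp add: field_simps power2_eq_square power3_eq_cube)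
  finally show ?thesis by (simp add: abs_mult)
qed

lemma bnd_upper:
  fixes H :: "real \<Rightarrow> real"
  assumes H: "continuous_on {0..d} H" and s: "s > 0" and d: "d \<ge> 0"
    and c: "c \<ge> 0"
    and bnd: "\<And>t. t \<in> {0..d} \<Longrightarrow> H t \<le> c * t^2"
  shows "s^2 * integral {0..d} (\<lambda>t. exp (- s * t) * H t) \<le> 2 * c / s"
proof -
  have i2: "(\<lambda>t. exp (- s * t) * t^2) integrable_on {0..d}" using K2[OF s d] by blast
  have fi: "(\<lambda>t. exp (- s * t) * H t) integrable_on {0..d}"
    by (intro integrable_continuous_interval continuous_intros H)
  have "integral {0..d} (\<lambda>t. exp (- s * t) * H t) \<le> integral {0..d} (\<lambda>t. c * (exp (- s * t) * t^2))"
    apply (rule integral_le[OF fi integrable_on_mult_right[OF i2]])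
    using bnd by (auto simp: algebra_simps intro!: mult_left_mono)
  also have "\<dots> = c * integral {0..d} (\<lambda>t. exp (- s * t) * t^2)" by simp
  also have "\<dots> \<le> c * (2 / s^3)" using I_bounds[OF s d] c by (intro mult_left_mono) auto
  finally have "s^2 * integral {0..d} (\<lambda>t. exp (- s * t) * H t) \<le> s^2 * (c * (2 / s^3))"
    by (intro mult_left_mono) auto
  also have "\<dots> = 2 * c / s" using s by (simp add: field_simps power2_eq_square power3_eq_cube)
  finally show ?thesis .
qed

lemma lap_right_nonneg:
  assumes "continuous_on {x..x+d} F" "\<And>t. t \<in> {0..d} \<Longrightarrow> F x \<le> F (x + t)"
  shows "lap_right F x d s \<ge> 0"
  unfolding lap_right_def
  by (intro mult_nonneg_nonneg integral_nonneg int_r assms) (auto intro!: mult_nonneg_nonneg assms)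



lemma cont_bound:
  fixes H :: "real \<Rightarrow> real"
  assumes "continuous_on {a..b} H"
  shows "\<exists>C\<ge>0. \<forall>t\<in>{a..b}. \<bar>H t\<bar> \<le> C"
proof -
  have "bounded (H ` {a..b})" by (intro compact_imp_bounded compact_continuous_image assms compact_Icc)
  then obtain C where "\<forall>y\<in>H ` {a..b}. norm y \<le> C" by (auto simp: bounded_iff)
  then show ?thesis by (intro exI[of _ "max C 0"]) force
qed

lemma lap_kernel_lim:
  fixes H :: "real \<Rightarrow> real"
  assumes cont: "continuous_on {0..d} H" and d: "d > 0"
    and der: "\<And>e. e > 0 \<Longrightarrow> \<exists>h>0. \<forall>t\<in>{0..d}. t < h \<longrightarrow> \<bar>H t - c * t\<bar> \<le> e * t"
  shows "((\<lambda>s. s^2 * integral {0..d} (\<lambda>t. exp (- s * t) * H t)) \<longlongrightarrow> c) at_top"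
proof (rule tendstoI)
  fix e :: real assume e: "e > 0"
  define r where "r = (\<lambda>t. H t - c * t)"
  have rc: "continuous_on {0..d} r" unfolding r_def by (intro continuous_intros cont)
  obtain C where C: "C \<ge> 0" "\<forall>t\<in>{0..d}. \<bar>r t\<bar> \<le> C" using cont_bound[OF rc] by blast
  obtain h where h: "h > 0" "\<forall>t\<in>{0..d}. t < h \<longrightarrow> \<bar>r t\<bar> \<le> (e/3) * t"
    using der[of "e/3"] e unfolding r_def by auto
  have rb: "\<bar>r t\<bar> \<le> 0 + (e/3) * t + (C / h^2) * t^2" if t: "t \<in> {0..d}" for t
  proof (cases "t < h")
    case True
    then have "\<bar>r t\<bar> \<le> (e/3) * t" using h t by auto
    moreover have "(C / h^2) * t^2 \<ge> 0" using C by auto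
    ultimately show ?thesis by linarith
  next
    case False
    then have "h^2 \<le> t^2" using h by (intro power_mono) auto
    then have "C \<le> (C / h^2) * t^2" using C h by (simp add: field_simps mult_left_mono)
    moreover have "(e/3) * t \<ge> 0" using e t by auto
    ultimately show ?thesis using C t by force
  qed
  have ev1: "eventually (\<lambda>s. \<bar>c\<bar> * \<bar>kap s d - 1\<bar> < e/3) at_top"
  proof -
    have "((\<lambda>s. \<bar>c\<bar> * \<bar>kap s d - 1\<bar>) \<longlongrightarrow> \<bar>c\<bar> * \<bar>1 - 1\<bar>) at_top"
      by (intro tendsto_intros kap_lim d)
    then have lim: "((\<lambda>s. \<bar>c\<bar> * \<bar>kap s d - 1\<bar>) \<longlongrightarrow> 0) at_top" by simp
    show ?thesis by (rule order_tendstoD(2)[OF lim]) (use e in simp)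
  qed
  have ev2: "eventually (\<lambda>s. 2 * (C / h^2) / s < e/3) at_top"
  proof -
    have lim: "((\<lambda>s::real. 2 * (C / h^2) / s) \<longlongrightarrow> 0) at_top" by real_asymp
    show ?thesis by (rule order_tendstoD(2)[OF lim]) (use e in simp)
  qed
  show "eventually (\<lambda>s. dist (s^2 * integral {0..d} (\<lambda>t. exp (- s * t) * H t)) c < e) at_top"
    using ev1 ev2 eventually_gt_at_top[of 0]
  proof eventually_elim
    case (elim s)
    have i1: "(\<lambda>t. exp (- s * t) * t) integrable_on {0..d}" using K1[OF elim(3) less_imp_le[OF d]] by blast
    have i2: "(\<lambda>t. exp (- s * t) * r t) integrable_on {0..d}"
      by (intro integrable_continuous_interval continuous_intros rc)
    have "integral {0..d} (\<lambda>t. exp (- s * t) * H t) = integral {0..d} (\<lambda>t. c * (exp (- s * t) * t) + exp (- s * t) * r t)"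
      unfolding r_def by (simp add: algebra_simps)
    also have "\<dots> = c * integral {0..d} (\<lambda>t. exp (- s * t) * t) + integral {0..d} (\<lambda>t. exp (- s * t) * r t)"
      by (intro integral_unique has_integral_add has_integral_mult_right integrable_integral i1 i2)
    finally have eq: "s^2 * integral {0..d} (\<lambda>t. exp (- s * t) * H t) = c * kap s d + s^2 * integral {0..d} (\<lambda>t. exp (- s * t) * r t)"
      using lap_right_id[OF elim(3), of d 0] d unfolding lap_right_def by (simp add: algebra_simps)
    have b: "\<bar>s^2 * integral {0..d} (\<lambda>t. exp (- s * t) * r t)\<bar> \<le> 0 * s + e/3 + 2 * (C / h^2) / s"
      using rb C h e d elim(3) by (intro bnd_gen rc) auto
    have "\<bar>c * kap s d - c\<bar> = \<bar>c\<bar> * \<bar>kap s d - 1\<bar>" by (simp add: abs_mult[symmetric] algebra_simps)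
    then show ?case unfolding eq dist_real_def using b elim by linarith
  qed
qed

lemma deriv_eps:
  assumes "(F has_real_derivative f) (at x)" "e > 0"
  shows "\<exists>h>0. \<forall>t. 0 < t \<and> t < h \<longrightarrow> \<bar>F (x + t) - F x - f * t\<bar> \<le> e * t \<and> \<bar>F (x - t) - F x + f * t\<bar> \<le> e * t"
proof -
  from assms(1) have "(\<lambda>h. (F (x + h) - F x) / h) \<midarrow>0\<rightarrow> f" by (simp add: DERIV_def)
  then obtain h where h: "h > 0" "\<forall>y. y \<noteq> 0 \<and> norm (y - 0) < h \<longrightarrow> norm ((F (x + y) - F x) / y - f) < e"
    using assms(2) unfolding LIM_eq by blast
  show ?thesis
  proof (intro exI[of _ h] conjI allI impI h(1))
    fix t assume t: "0 < t \<and> t < h"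
    have "\<bar>(F (x + t) - F x) / t - f\<bar> < e" using h(2)[rule_format, of t] t by auto
    then have "\<bar>((F (x + t) - F x) - f * t) / t\<bar> < e" using t by (simp add: field_simps)
    then show "\<bar>F (x + t) - F x - f * t\<bar> \<le> e * t" using t by (simp add: abs_div field_simps)
    have "\<bar>(F (x + - t) - F x) / (- t) - f\<bar> < e" using h(2)[rule_format, of "-t"] t by auto
    then have "\<bar>((F (x - t) - F x) + f * t) / t\<bar> < e" using t by (simp add: field_simps)
    then show "\<bar>F (x - t) - F x + f * t\<bar> \<le> e * t" using t by (simp add: abs_div field_simps)
  qed
qed

lemma lap_right_deriv:
  assumes "(F has_real_derivative f) (at x)" "continuous_on {x..x+d} F" "d > 0"
  shows "((\<lambda>s. lap_right F x d s) \<longlongrightarrow> f) at_top"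
proof -
  have "((\<lambda>s. s^2 * integral {0..d} (\<lambda>t. exp (- s * t) * (F (x + t) - F x))) \<longlongrightarrow> f) at_top"
  proof (rule lap_kernel_lim[where H="\<lambda>t. F (x + t) - F x", OF _ assms(3)])
    show "continuous_on {0..d} (\<lambda>t. F (x + t) - F x)" by (intro continuous_intros cont_shift_r assms(2))
  next
    fix e :: real assume "e > 0"
    from deriv_eps[OF assms(1) this] obtain h where h: "h > 0" "\<forall>t. 0 < t \<and> t < h \<longrightarrow> \<bar>F (x + t) - F x - f * t\<bar> \<le> e * t" by blast
    show "\<exists>h>0. \<forall>t\<in>{0..d}. t < h \<longrightarrow> \<bar>F (x + t) - F x - f * t\<bar> \<le> e * t"
    proof (intro exI[of _ h] conjI ballI impI h(1))
      fix t assume "t \<in> {0..d}" "t < h"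
      then show "\<bar>F (x + t) - F x - f * t\<bar> \<le> e * t" using h by (cases "t = 0") auto
    qed
  qed
  then show ?thesis unfolding lap_right_def .
qed

lemma lap_left_deriv:
  assumes "(F has_real_derivative f) (at x)" "continuous_on {x-d..x} F" "d > 0"
  shows "((\<lambda>s. lap_left F x d s) \<longlongrightarrow> f) at_top"
proof -
  have "((\<lambda>s. s^2 * integral {0..d} (\<lambda>t. exp (- s * t) * (F (x - t) - F x))) \<longlongrightarrow> - f) at_top"
  proof (rule lap_kernel_lim[where H="\<lambda>t. F (x - t) - F x", OF _ assms(3)])
    show "continuous_on {0..d} (\<lambda>t. F (x - t) - F x)" by (intro continuous_intros cont_shift_l assms(2))
  next
    fix e :: real assume "e > 0"
    from deriv_eps[OF assms(1) this] obtain h where h: "h > 0" "\<forall>t. 0 < t \<and> t < h \<longrightarrow> \<bar>F (x - t) - F x + f * t\<bar> \<le> e * t" by blast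
    show "\<exists>h>0. \<forall>t\<in>{0..d}. t < h \<longrightarrow> \<bar>F (x - t) - F x - (- f) * t\<bar> \<le> e * t"
    proof (intro exI[of _ h] conjI ballI impI h(1))
      fix t assume "t \<in> {0..d}" "t < h"
      then show "\<bar>F (x - t) - F x - (- f) * t\<bar> \<le> e * t" using h by (cases "t = 0") auto
    qed
  qed
  then have "((\<lambda>s. - (s^2 * integral {0..d} (\<lambda>t. exp (- s * t) * (F (x - t) - F x)))) \<longlongrightarrow> - (- f)) at_top"
    by (intro tendsto_minus)
  then show ?thesis unfolding lap_left_def by simp
qed

lemma lap_right_delta:
  assumes cont: "continuous_on {x..x+d2} F" and d: "0 < d1" "d1 \<le> d2"
  shows "((\<lambda>s. lap_right F x d2 s - lap_right F x d1 s) \<longlongrightarrow> 0) at_top"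
proof -
  define H where "H = (\<lambda>t. F (x + t) - F x)"
  have Hc: "continuous_on {0..d2} H" unfolding H_def by (intro continuous_intros cont_shift_r cont)
  obtain C where C: "C \<ge> 0" "\<forall>t\<in>{0..d2}. \<bar>H t\<bar> \<le> C" using cont_bound[OF Hc] by blast
  have lim: "((\<lambda>s. s^2 * (exp (- s * d1) * C * (d2 - d1))) \<longlongrightarrow> 0) at_top" using d by real_asymp
  have "eventually (\<lambda>s. \<bar>lap_right F x d2 s - lap_right F x d1 s\<bar> \<le> s^2 * (exp (- s * d1) * C * (d2 - d1))) at_top"
    using eventually_gt_at_top[of 0]
  proof eventually_elim
    case (elim s)
    have fi: "(\<lambda>t. exp (- s * t) * H t) integrable_on {0..d2}"
      by (intro integrable_continuous_interval continuous_intros Hc)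
    have comb: "integral {0..d1} (\<lambda>t. exp (- s * t) * H t) + integral {d1..d2} (\<lambda>t. exp (- s * t) * H t) = integral {0..d2} (\<lambda>t. exp (- s * t) * H t)"
      by (rule Henstock_Kurzweil_Integration.integral_combine[OF _ _ fi]) (use d in auto)
    have fi2: "(\<lambda>t. exp (- s * t) * H t) integrable_on {d1..d2}"
      using d by (intro integrable_subinterval_real[OF fi]) auto
    have "norm (integral {d1..d2} (\<lambda>t. exp (- s * t) * H t)) \<le> integral {d1..d2} (\<lambda>t. exp (- s * d1) * C)"
    proof (rule integral_norm_bound_integral[OF fi2])
      show "(\<lambda>t. exp (- s * d1) * C) integrable_on {d1..d2}" by (intro integrable_continuous_interval continuous_intros)
      fix t assume t: "t \<in> {d1..d2}"
      have "norm (exp (- s * t) * H t) = exp (- s * t) * \<bar>H t\<bar>" by (simp add: abs_mult)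
      also have "\<dots> \<le> exp (- s * d1) * C"
        using C t d elim by (intro mult_mono) auto
      finally show "norm (exp (- s * t) * H t) \<le> exp (- s * d1) * C" .
    qed
    also have "\<dots> = exp (- s * d1) * C * (d2 - d1)" using d by simp
    finally have b: "\<bar>integral {d1..d2} (\<lambda>t. exp (- s * t) * H t)\<bar> \<le> exp (- s * d1) * C * (d2 - d1)" by simp
    have "lap_right F x d2 s - lap_right F x d1 s = s^2 * integral {d1..d2} (\<lambda>t. exp (- s * t) * H t)"
    proof -
      have e: "lap_right F x dd s = s^2 * integral {0..dd} (\<lambda>t. exp (- s * t) * H t)" for dd
        unfolding lap_right_def H_def by simp
      show ?thesis unfolding e comb[symmetric] by (simp add: algebra_simps)
    qed
    then show ?case using b by (simp add: abs_mult mult_left_mono)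
  qed
  then have "eventually (\<lambda>s. norm (lap_right F x d2 s - lap_right F x d1 s) \<le> s^2 * (exp (- s * d1) * C * (d2 - d1))) at_top"
    by simp
  then show ?thesis
    by (rule Lim_null_comparison) (rule lim)
qed



lemma ev_freq:
  assumes "eventually P (at_top :: real filter)"
  shows "\<exists>s\<ge>S. P s"
proof -
  from assms obtain N where "\<forall>n\<ge>N. P n" by (auto simp: eventually_at_top_linorder)
  then show ?thesis by (intro exI[of _ "max S N"]) auto
qed

lemma rise:
  fixes \<phi> :: "real \<Rightarrow> real"
  assumes cont: "continuous_on {x..x+d} \<phi>" and d: "d > 0" and c: "c > 0"
    and freq: "\<And>S. \<exists>s\<ge>S. lap_right \<phi> x d s \<ge> c" and h: "h > 0"
  shows "\<exists>t. 0 < t \<and> t < h \<and> t \<le> d \<and> \<phi> (x + t) > \<phi> x"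
proof (rule ccontr)
  assume neg: "\<not> ?thesis"
  define \<eta> where "\<eta> = min h d / 2"
  have eta: "\<eta> > 0" "\<eta> < h" "\<eta> < d" using h d unfolding \<eta>_def by auto
  define H where "H = (\<lambda>t. \<phi> (x + t) - \<phi> x)"
  have Hc: "continuous_on {0..d} H" unfolding H_def by (intro continuous_intros cont_shift_r cont)
  obtain C where C: "C \<ge> 0" "\<forall>t\<in>{0..d}. \<bar>H t\<bar> \<le> C" using cont_bound[OF Hc] by blast
  have Hb: "H t \<le> (C / \<eta>^2) * t^2" if t: "t \<in> {0..d}" for t
  proof (cases "t < \<eta>")
    case True
    have "H t \<le> 0"
    proof (cases "t = 0")
      case False
      then have "0 < t" "t < h" "t \<le> d" using True t eta by auto
      then show ?thesis using neg unfolding H_def by (meson diff_le_0_iff_le not_le)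
    qed (simp add: H_def)
    then show ?thesis using C by (smt (verit) divide_nonneg_nonneg mult_nonneg_nonneg zero_le_power2)
  next
    case False
    then have "\<eta>^2 \<le> t^2" using eta by (intro power_mono) auto
    then have "C \<le> (C / \<eta>^2) * t^2" using C eta by (simp add: field_simps mult_left_mono)
    then show ?thesis using C t by force
  qed
  obtain s where s: "s \<ge> 2 * (C / \<eta>^2) / c + 1" "lap_right \<phi> x d s \<ge> c" using freq by blast
  have spos: "s > 0" using s(1) C c by (smt (verit) divide_nonneg_nonneg zero_le_power2)
  have "lap_right \<phi> x d s \<le> 2 * (C / \<eta>^2) / s"
  proof -
    have "lap_right \<phi> x d s = s^2 * integral {0..d} (\<lambda>t. exp (- s * t) * H t)"
      unfolding lap_right_def H_def by simp
    then show ?thesis using bnd_upper[OF Hc spos _ _ Hb] d C eta by auto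
  qed
  also have "\<dots> < c"
  proof -
    define C' where "C' = 2 * (C / \<eta>^2)"
    have C'0: "C' \<ge> 0" unfolding C'_def using C by auto
    have "c * s \<ge> c * (C' / c + 1)" using s(1) c unfolding C'_def by (intro mult_left_mono) auto
    also have "c * (C' / c + 1) = C' + c" using c by (simp add: field_simps)
    finally have "C' < c * s" using c by linarith
    then have "C' / s < c" using spos by (simp add: divide_less_eq mult.commute)
    then show ?thesis unfolding C'_def .
  qed
  finally show False using s(2) by simp
qed

lemma mono_rise:
  fixes \<phi> :: "real \<Rightarrow> real"
  assumes cont: "continuous_on {a..b} \<phi>"
    and rise: "\<And>x h. x \<in> {a..<b} \<Longrightarrow> h > 0 \<Longrightarrow> \<exists>t. 0 < t \<and> t < h \<and> x + t \<le> b \<and> \<phi> (x + t) > \<phi> x"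
    and yz: "a \<le> y" "y \<le> z" "z \<le> b"
  shows "\<phi> y \<le> \<phi> z"
proof (rule ccontr)
  assume neg: "\<not> \<phi> y \<le> \<phi> z"
  define S where "S = {u \<in> {y..z}. \<phi> y \<le> \<phi> u}"
  have cl: "closed S" unfolding S_def
    by (intro continuous_on_closed_Collect_le continuous_intros continuous_on_subset[OF cont]) (use yz in auto)
  have ne: "S \<noteq> {}" using yz unfolding S_def by auto
  have bdd: "bdd_above S" unfolding S_def by (auto intro: bdd_aboveI[of _ z])
  define c where "c = Sup S"
  have cS: "c \<in> S" unfolding c_def by (rule closed_contains_Sup[OF ne bdd cl])
  then have c1: "y \<le> c" "c \<le> z" "\<phi> y \<le> \<phi> c" unfolding S_def by auto
  have "c \<noteq> z" using c1 neg by auto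
  then have cz: "c < z" using c1 by auto
  obtain t where t: "0 < t" "t < z - c" "c + t \<le> b" "\<phi> (c + t) > \<phi> c"
    using rise[of c "z - c"] c1 cz yz by auto
  have "c + t \<in> S" unfolding S_def using t c1 by auto
  then have "c + t \<le> c" unfolding c_def by (intro cSup_upper bdd)
  then show False using t by simp
qed

lemma mono_from_lap:
  fixes \<phi> :: "real \<Rightarrow> real"
  assumes cont: "continuous_on {a..b} \<phi>"
    and lap: "\<And>x. x \<in> {a..<b} \<Longrightarrow> \<exists>c>0. \<forall>S. \<exists>s\<ge>S. lap_right \<phi> x (b - x) s \<ge> c"
    and yz: "a \<le> y" "y \<le> z" "z \<le> b"
  shows "\<phi> y \<le> \<phi> z"
proof (rule mono_rise[OF cont _ yz])
  fix x h :: real assume x: "x \<in> {a..<b}" and h: "h > 0"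
  obtain c where c: "c > 0" "\<forall>S. \<exists>s\<ge>S. lap_right \<phi> x (b - x) s \<ge> c" using lap[OF x] by blast
  have "continuous_on {x..x + (b - x)} \<phi>" using x by (intro continuous_on_subset[OF cont]) auto
  from rise[OF this _ c(1) _ h] c(2) x
  show "\<exists>t. 0 < t \<and> t < h \<and> x + t \<le> b \<and> \<phi> (x + t) > \<phi> x" by force
qed

lemma liminf_ev:
  assumes "ereal c \<le> Liminf at_top (\<lambda>s. ereal (X s))" "e > 0"
  shows "eventually (\<lambda>s. X s > c - e) at_top"
proof -
  have "ereal (c - e) < ereal c" using assms(2) by simp
  then have "eventually (\<lambda>s. ereal (c - e) < ereal (X s)) at_top"
    using assms(1) unfolding le_Liminf_iff by blast
  then show ?thesis by simp
qed

lemma limsup_ev: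
  assumes "Limsup at_top (\<lambda>s. ereal (X s)) \<le> ereal c" "e > 0"
  shows "eventually (\<lambda>s. X s < c + e) at_top"
proof -
  have "ereal (c + e) > ereal c" using assms(2) by simp
  then have "eventually (\<lambda>s. ereal (c + e) > ereal (X s)) at_top"
    using assms(1) unfolding Limsup_le_iff by blast
  then show ?thesis by simp
qed

lemma ev_liminf:
  assumes "\<And>e. e > 0 \<Longrightarrow> eventually (\<lambda>s. X s > c - e) at_top"
  shows "ereal c \<le> Liminf at_top (\<lambda>s. ereal (X s))"
  unfolding le_Liminf_iff
proof (intro allI impI)
  fix y assume y: "y < ereal c"
  show "eventually (\<lambda>s. y < ereal (X s)) at_top"
  proof (cases y)
    case (real r)
    then have "eventually (\<lambda>s. X s > c - (c - r)) at_top" using y by (intro assms) auto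
    then show ?thesis using real by (auto elim: eventually_mono)
  next
    case MInf then show ?thesis by simp
  next
    case PInf then show ?thesis using y by simp
  qed
qed

lemma lowerLD_right:
  assumes "a \<le> x" "x < b"
  shows "lower_LD a b F x \<le> Liminf at_top (\<lambda>s. ereal (lap_right F x (b - x) s))"
  using assms unfolding lower_LD_def Let_def by auto

lemma lowerLD_left:
  assumes "a < x" "x \<le> b"
  shows "lower_LD a b F x \<le> Liminf at_top (\<lambda>s. ereal (lap_left F x (x - a) s))"
  using assms unfolding lower_LD_def Let_def by auto

lemma upperLD_right:
  assumes "a \<le> x" "x < b"
  shows "Limsup at_top (\<lambda>s. ereal (lap_right F x (b - x) s)) \<le> upper_LD a b F x"
  using assms unfolding upper_LD_def Let_def by auto

lemma upperLD_left:
  assumes "a < x" "x \<le> b"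
  shows "Limsup at_top (\<lambda>s. ereal (lap_left F x (x - a) s)) \<le> upper_LD a b F x"
  using assms unfolding upper_LD_def Let_def by auto

lemma lowerLD_intro:
  assumes "a < b" "a \<le> x" "x \<le> b"
    and "x < b \<Longrightarrow> e \<le> Liminf at_top (\<lambda>s. ereal (lap_right F x (b - x) s))"
    and "a < x \<Longrightarrow> e \<le> Liminf at_top (\<lambda>s. ereal (lap_left F x (x - a) s))"
  shows "e \<le> lower_LD a b F x"
  using assms unfolding lower_LD_def Let_def by auto

lemma upperLD_intro:
  assumes "a < b" "a \<le> x" "x \<le> b"
    and "x < b \<Longrightarrow> Limsup at_top (\<lambda>s. ereal (lap_right F x (b - x) s)) \<le> e"
    and "a < x \<Longrightarrow> Limsup at_top (\<lambda>s. ereal (lap_left F x (x - a) s)) \<le> e"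
  shows "upper_LD a b F x \<le> e"
  using assms unfolding upper_LD_def Let_def by auto



lemma major_minor_mono:
  assumes ab: "a < b" and U: "major_fun a b f U" and V: "minor_fun a b f V"
    and yz: "a \<le> y" "y \<le> z" "z \<le> b"
  shows "U y - V y \<le> U z - V z"
proof (rule ccontr)
  assume neg: "\<not> ?thesis"
  define \<epsilon> where "\<epsilon> = ((U y - V y) - (U z - V z)) / (z - y + 1)"
  have ep: "\<epsilon> > 0" unfolding \<epsilon>_def using neg yz by auto
  have Uc: "continuous_on {a..b} U" and Vc: "continuous_on {a..b} V"
    using U V unfolding major_fun_def minor_fun_def by auto
  define \<phi> where "\<phi> = (\<lambda>x. (U x - V x) + \<epsilon> * x)"
  have \<phi>c: "continuous_on {a..b} \<phi>" unfolding \<phi>_def by (intro continuous_intros Uc Vc)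
  have m: "\<phi> y \<le> \<phi> z"
  proof (rule mono_from_lap[OF \<phi>c _ yz])
    fix x assume x: "x \<in> {a..<b}"
    have d: "b - x > 0" using x by auto
    have sub: "{x..x + (b - x)} \<subseteq> {a..b}" using x by auto
    have Ucx: "continuous_on {x..x + (b - x)} U" by (rule continuous_on_subset[OF Uc sub])
    have Vcx: "continuous_on {x..x + (b - x)} V" by (rule continuous_on_subset[OF Vc sub])
    have "ereal (f x) \<le> lower_LD a b U x" using U x unfolding major_fun_def by auto
    also have "\<dots> \<le> Liminf at_top (\<lambda>s. ereal (lap_right U x (b - x) s))" using x by (intro lowerLD_right) auto
    finally have e1: "eventually (\<lambda>s. lap_right U x (b - x) s > f x - \<epsilon>/4) at_top"
      using ep by (intro liminf_ev) auto
    have "Limsup at_top (\<lambda>s. ereal (lap_right V x (b - x) s)) \<le> upper_LD a b V x" using x by (intro upperLD_right) auto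
    also have "\<dots> \<le> ereal (f x)" using V x unfolding minor_fun_def by auto
    finally have e2: "eventually (\<lambda>s. lap_right V x (b - x) s < f x + \<epsilon>/4) at_top"
      using ep by (intro limsup_ev) auto
    have e3: "eventually (\<lambda>s. kap s (b - x) > 3/4) at_top"
      by (rule order_tendstoD(1)[OF kap_lim[OF d]]) simp
    have "eventually (\<lambda>s. lap_right \<phi> x (b - x) s \<ge> \<epsilon>/4) at_top"
      using e1 e2 e3 eventually_gt_at_top[of 0]
    proof eventually_elim
      case (elim s)
      have "lap_right \<phi> x (b - x) s = lap_right (\<lambda>x. U x - V x) x (b - x) s + lap_right (\<lambda>x. \<epsilon> * x) x (b - x) s"
        unfolding \<phi>_def by (intro lap_right_add continuous_intros Ucx Vcx)
      also have "\<dots> = lap_right U x (b - x) s - lap_right V x (b - x) s + \<epsilon> * kap s (b - x)"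
        using lap_right_diff[OF Ucx Vcx] lap_right_cmult[of \<epsilon> "\<lambda>x. x"] lap_right_id[OF elim(4), of "b - x" x] d by simp
      moreover have "\<epsilon> * kap s (b - x) \<ge> \<epsilon> * (3/4)" using elim(3) ep by (intro mult_left_mono) auto
      ultimately show ?case using elim(1,2) by linarith
    qed
    then show "\<exists>c>0. \<forall>S. \<exists>s\<ge>S. lap_right \<phi> x (b - x) s \<ge> c"
      using ep by (intro exI[of _ "\<epsilon>/4"]) (auto intro: ev_freq)
  qed
  then have "(U y - V y) - (U z - V z) \<le> \<epsilon> * (z - y)" unfolding \<phi>_def by (simp add: algebra_simps)
  also have "\<dots> < (U y - V y) - (U z - V z)"
  proof -
    have "\<epsilon> * (z - y) < \<epsilon> * (z - y + 1)" using ep by simp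
    also have "\<dots> = (U y - V y) - (U z - V z)" unfolding \<epsilon>_def using yz by simp
    finally show ?thesis .
  qed
  finally show False by simp
qed

lemma lap_bounds:
  assumes ab: "a < b" and U: "major_fun a b f U" and V: "minor_fun a b f V"
  shows "ereal (V b - V a) \<le> lap_lower a b f" "lap_lower a b f \<le> lap_upper a b f"
    "lap_upper a b f \<le> ereal (U b - U a)"
proof -
  show "ereal (V b - V a) \<le> lap_lower a b f" unfolding lap_lower_def using V by (intro SUP_upper) auto
  show "lap_upper a b f \<le> ereal (U b - U a)" unfolding lap_upper_def using U by (intro INF_lower) auto
  show "lap_lower a b f \<le> lap_upper a b f" unfolding lap_lower_def lap_upper_def
  proof (intro SUP_least INF_greatest)
    fix V' U' assume "V' \<in> {V. minor_fun a b f V}" "U' \<in> {U. major_fun a b f U}"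
    then have "U' a - V' a \<le> U' b - V' b" using ab by (intro major_minor_mono) auto
    then show "ereal (V' b - V' a) \<le> ereal (U' b - U' a)" by simp
  qed
qed

lemma LP_integral_bounds:
  assumes ab: "a < b" and U: "major_fun a b f U" and V: "minor_fun a b f V"
  shows "V b - V a \<le> LP_integral a b f" "LP_integral a b f \<le> U b - U a"
proof -
  have l: "ereal (V b - V a) \<le> lap_upper a b f" using lap_bounds[OF assms] by (meson order_trans)
  have u: "lap_upper a b f \<le> ereal (U b - U a)" using lap_bounds[OF assms] by blast
  obtain r where r: "lap_upper a b f = ereal r" using l u by (cases "lap_upper a b f") auto
  show "V b - V a \<le> LP_integral a b f" "LP_integral a b f \<le> U b - U a"
    using l u r unfolding LP_integral_def by auto
qed

lemma LP_exact:
  assumes ab: "a < b" and U: "major_fun a b f F" and V: "minor_fun a b f F"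
  shows "LP_integrable a b f" "LP_integral a b f = F b - F a"
proof -
  note lb = lap_bounds[OF ab U V]
  have "lap_upper a b f = ereal (F b - F a)" using lb by (metis antisym order.trans)
  moreover have "lap_lower a b f = ereal (F b - F a)" using lb by (metis antisym order.trans)
  ultimately show "LP_integrable a b f" "LP_integral a b f = F b - F a"
    unfolding LP_integrable_def LP_integral_def by auto
qed



lemma ereal_neg_minmax:
  fixes R L :: ereal
  shows "- min R L = max (- R) (- L)" "- max R L = min (- R) (- L)"
  by (auto simp: min_def max_def)

lemma upper_LD_uminus: "upper_LD a b (\<lambda>x. - V x) x = - lower_LD a b V x"
proof -
  have r: "(\<lambda>s. ereal (lap_right (\<lambda>x. - V x) x d s)) = (\<lambda>s. - ereal (lap_right V x d s))" for d
    by (simp add: lap_right_uminus)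
  have l: "(\<lambda>s. ereal (lap_left (\<lambda>x. - V x) x d s)) = (\<lambda>s. - ereal (lap_left V x d s))" for d
    by (simp add: lap_left_uminus)
  show ?thesis unfolding upper_LD_def lower_LD_def Let_def r l ereal_Limsup_uminus
    by (simp add: ereal_neg_minmax)
qed

lemma lower_LD_uminus: "lower_LD a b (\<lambda>x. - V x) x = - upper_LD a b V x"
proof -
  have r: "(\<lambda>s. ereal (lap_right (\<lambda>x. - V x) x d s)) = (\<lambda>s. - ereal (lap_right V x d s))" for d
    by (simp add: lap_right_uminus)
  have l: "(\<lambda>s. ereal (lap_left (\<lambda>x. - V x) x d s)) = (\<lambda>s. - ereal (lap_left V x d s))" for d
    by (simp add: lap_left_uminus)
  show ?thesis unfolding upper_LD_def lower_LD_def Let_def r l ereal_Liminf_uminus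
    by (simp add: ereal_neg_minmax)
qed

lemma minor_iff_major_neg:
  "minor_fun a b f V \<longleftrightarrow> major_fun a b (\<lambda>x. - f x) (\<lambda>x. - V x)"
proof -
  have c: "continuous_on {a..b} V \<longleftrightarrow> continuous_on {a..b} (\<lambda>x. - V x)"
    using continuous_on_minus[of "{a..b}" V] continuous_on_minus[of "{a..b}" "\<lambda>x. - V x"] by auto
  have p: "(upper_LD a b V x \<le> ereal (f x) \<and> upper_LD a b V x < \<infinity>) \<longleftrightarrow>
        (ereal (- f x) \<le> - upper_LD a b V x \<and> - upper_LD a b V x > -\<infinity>)" for x
    by (cases "upper_LD a b V x") auto
  show ?thesis unfolding minor_fun_def major_fun_def lower_LD_uminus using c p by auto
qed

lemma deriv_cont:
  assumes "\<And>y. (F has_real_derivative f y) (at y)"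
  shows "continuous_on S F"
  using assms by (intro continuous_at_imp_continuous_on ballI) (blast intro: DERIV_isCont)

lemma deriv_major_minor:
  assumes ab: "a < b" and der: "\<And>y. (F has_real_derivative f y) (at y)"
  shows "major_fun a b f F" "minor_fun a b f F"
proof -
  have Fc: "continuous_on S F" for S by (rule deriv_cont[OF der])
  have R: "((\<lambda>s. ereal (lap_right F x (b - x) s)) \<longlongrightarrow> ereal (f x)) at_top" if "x < b" for x
    using that by (intro tendsto_ereal lap_right_deriv der Fc) auto
  have L: "((\<lambda>s. ereal (lap_left F x (x - a) s)) \<longlongrightarrow> ereal (f x)) at_top" if "a < x" for x
    using that by (intro tendsto_ereal lap_left_deriv der Fc) auto
  have lo: "ereal (f x) \<le> lower_LD a b F x" if "x \<in> {a..b}" for x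
    using that ab by (intro lowerLD_intro) (auto simp: lim_imp_Liminf[OF _ R] lim_imp_Liminf[OF _ L])
  have up: "upper_LD a b F x \<le> ereal (f x)" if "x \<in> {a..b}" for x
    using that ab by (intro upperLD_intro) (auto simp: lim_imp_Limsup[OF _ R] lim_imp_Limsup[OF _ L])
  show "major_fun a b f F" unfolding major_fun_def using Fc lo
    by (metis MInfty_neq_ereal(1) ereal_infty_less_eq(2) linorder_not_less)
  show "minor_fun a b f F" unfolding minor_fun_def using Fc up
    by (metis PInfty_neq_ereal(1) ereal_infty_less_eq(1) linorder_not_less)
qed

lemma restrict_major:
  assumes ac: "a < c" "c \<le> b" and der: "\<And>y. (F has_real_derivative f y) (at y)"
    and V: "minor_fun a b g V"
  shows "major_fun a c (\<lambda>y. f y - g y) (\<lambda>y. F y - V y)"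
proof -
  have Fc: "continuous_on S F" for S by (rule deriv_cont[OF der])
  have Vc: "continuous_on {a..b} V" using V unfolding minor_fun_def by auto
  have Vc': "continuous_on S V" if "S \<subseteq> {a..b}" for S by (rule continuous_on_subset[OF Vc that])
  have lo: "ereal (f y - g y) \<le> lower_LD a c (\<lambda>y. F y - V y) y" if y: "y \<in> {a..c}" for y
  proof (rule lowerLD_intro)
    show "a < c" "a \<le> y" "y \<le> c" using ac y by auto
  next
    assume yc: "y < c"
    have d: "c - y > 0" "c - y \<le> b - y" using yc ac by auto
    have RF: "((\<lambda>s. lap_right F y (c - y) s) \<longlongrightarrow> f y) at_top"
      by (intro lap_right_deriv der Fc d)
    have RD: "((\<lambda>s. lap_right V y (b - y) s - lap_right V y (c - y) s) \<longlongrightarrow> 0) at_top"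
      using y ac by (intro lap_right_delta Vc' d) auto
    have "Limsup at_top (\<lambda>s. ereal (lap_right V y (b - y) s)) \<le> upper_LD a b V y"
      using y ac yc by (intro upperLD_right) auto
    also have "\<dots> \<le> ereal (g y)" using V y ac unfolding minor_fun_def by auto
    finally have Lv: "Limsup at_top (\<lambda>s. ereal (lap_right V y (b - y) s)) \<le> ereal (g y)" .
    show "ereal (f y - g y) \<le> Liminf at_top (\<lambda>s. ereal (lap_right (\<lambda>y. F y - V y) y (c - y) s))"
    proof (rule ev_liminf)
      fix e :: real assume e: "e > 0"
      have e1: "eventually (\<lambda>s. lap_right F y (c - y) s > f y - e/3) at_top"
        using RF e by (auto simp: order_tendsto_iff)
      have e2: "eventually (\<lambda>s. lap_right V y (b - y) s - lap_right V y (c - y) s > - (e/3)) at_top"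
        using RD e by (auto simp: order_tendsto_iff)
      have e3: "eventually (\<lambda>s. lap_right V y (b - y) s < g y + e/3) at_top"
        using e by (intro limsup_ev[OF Lv]) auto
      show "eventually (\<lambda>s. lap_right (\<lambda>y. F y - V y) y (c - y) s > f y - g y - e) at_top"
        using e1 e2 e3
      proof eventually_elim
        case (elim s)
        have "lap_right (\<lambda>y. F y - V y) y (c - y) s = lap_right F y (c - y) s - lap_right V y (c - y) s"
          using y ac by (intro lap_right_diff Fc Vc') auto
        then show ?case using elim by linarith
      qed
    qed
  next
    assume ay: "a < y"
    have d: "y - a > 0" using ay by auto
    have LF: "((\<lambda>s. lap_left F y (y - a) s) \<longlongrightarrow> f y) at_top"
      by (intro lap_left_deriv der Fc d)
    have "Limsup at_top (\<lambda>s. ereal (lap_left V y (y - a) s)) \<le> upper_LD a b V y"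
      using y ac ay by (intro upperLD_left) auto
    also have "\<dots> \<le> ereal (g y)" using V y ac unfolding minor_fun_def by auto
    finally have Lv: "Limsup at_top (\<lambda>s. ereal (lap_left V y (y - a) s)) \<le> ereal (g y)" .
    show "ereal (f y - g y) \<le> Liminf at_top (\<lambda>s. ereal (lap_left (\<lambda>y. F y - V y) y (y - a) s))"
    proof (rule ev_liminf)
      fix e :: real assume e: "e > 0"
      have e1: "eventually (\<lambda>s. lap_left F y (y - a) s > f y - e/2) at_top"
        using LF e by (auto simp: order_tendsto_iff)
      have e3: "eventually (\<lambda>s. lap_left V y (y - a) s < g y + e/2) at_top"
        using e by (intro limsup_ev[OF Lv]) auto
      show "eventually (\<lambda>s. lap_left (\<lambda>y. F y - V y) y (y - a) s > f y - g y - e) at_top"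
        using e1 e3
      proof eventually_elim
        case (elim s)
        have "lap_left (\<lambda>y. F y - V y) y (y - a) s = lap_left F y (y - a) s - lap_left V y (y - a) s"
          using y ac by (intro lap_left_diff Fc Vc') auto
        then show ?case using elim by linarith
      qed
    qed
  qed
  have cont: "continuous_on {a..c} (\<lambda>y. F y - V y)" using ac by (intro continuous_intros Fc Vc') auto
  show ?thesis unfolding major_fun_def using cont lo
    by (metis MInfty_neq_ereal(1) ereal_infty_less_eq(2) linorder_not_less)
qed

lemma restrict_minor:
  assumes ac: "a < c" "c \<le> b" and der: "\<And>y. (F has_real_derivative f y) (at y)"
    and U: "major_fun a b g U"
  shows "minor_fun a c (\<lambda>y. f y - g y) (\<lambda>y. F y - U y)"
proof -
  have der': "((\<lambda>x. - F x) has_real_derivative - f y) (at y)" for y by (intro derivative_intros der)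
  have U': "minor_fun a b (\<lambda>x. - g x) (\<lambda>x. - U x)" unfolding minor_iff_major_neg using U by simp
  have "major_fun a c (\<lambda>y. - f y - - g y) (\<lambda>y. - F y - - U y)"
    by (rule restrict_major[OF ac der' U'])
  then show ?thesis unfolding minor_iff_major_neg by (simp add: algebra_simps)
qed



definition aa :: "nat \<Rightarrow> real" where "aa k = (1/1000)^k"
definition bb :: "nat \<Rightarrow> real" where "bb k = 100000^k"
definition Fs :: "nat \<Rightarrow> real \<Rightarrow> real" where "Fs n x = (\<Sum>k<n. aa k * sin (bb k * x))"
definition fs :: "nat \<Rightarrow> real \<Rightarrow> real" where "fs n x = (\<Sum>k<n. aa k * bb k * cos (bb k * x))"
definition Ws :: "real \<Rightarrow> real" where "Ws x = (\<Sum>k. aa k * sin (bb k * x))"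

lemma aa_pos: "aa k > 0" unfolding aa_def by simp
lemma bb_pos: "bb k > 0" unfolding bb_def by simp
lemma aabb: "aa k * bb k = 100^k" unfolding aa_def bb_def by (simp add: power_mult_distrib[symmetric])

lemma aa_summable: "summable aa"
  unfolding aa_def by (rule summable_geometric) simp

lemma aa_shift: "(\<Sum>k. aa (k + n)) = aa n * (1000/999)"
proof -
  have "(\<lambda>k. aa (k + n)) = (\<lambda>k. aa n * (1/1000)^k)" unfolding aa_def by (simp add: power_add mult.commute)
  moreover have "(\<Sum>k. (1/1000::real)^k) = 1000/999" by (subst suminf_geometric) auto
  ultimately show ?thesis by (simp add: suminf_mult)
qed

lemma aa_shift_summable: "summable (\<lambda>k. aa (k + n))"
  using aa_summable by (rule summable_ignore_initial_segment)

lemma term_bound: "\<bar>aa k * sin (bb k * x)\<bar> \<le> aa k"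
  using aa_pos[of k] by (simp add: abs_mult mult_left_le)

lemma term_summable: "summable (\<lambda>k. aa k * sin (bb k * x))"
  by (rule summable_comparison_test'[OF aa_summable]) (use term_bound in simp)

lemma tail_bound: "\<bar>Ws x - Fs n x\<bar> \<le> 2 * aa n"
proof -
  have "Ws x = (\<Sum>k. aa (k + n) * sin (bb (k + n) * x)) + Fs n x"
    unfolding Ws_def Fs_def by (rule suminf_split_initial_segment[OF term_summable])
  then have eq: "Ws x - Fs n x = (\<Sum>k. aa (k + n) * sin (bb (k + n) * x))" by simp
  have sn: "summable (\<lambda>k. norm (aa (k + n) * sin (bb (k + n) * x)))"
    by (rule summable_comparison_test'[OF aa_shift_summable]) (use term_bound in simp)
  have "norm (\<Sum>k. aa (k + n) * sin (bb (k + n) * x)) \<le> (\<Sum>k. norm (aa (k + n) * sin (bb (k + n) * x)))"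
    by (rule summable_norm[OF sn])
  also have "\<dots> \<le> (\<Sum>k. aa (k + n))"
    by (rule suminf_le[OF _ sn aa_shift_summable]) (use term_bound in simp)
  also have "\<dots> \<le> 2 * aa n" unfolding aa_shift using aa_pos[of n] by simp
  finally show ?thesis unfolding eq by simp
qed

lemma Fs_deriv: "(Fs n has_real_derivative fs n x) (at x)"
  unfolding Fs_def fs_def by (auto intro!: derivative_eq_intros simp: algebra_simps)

lemma Fs_0: "Fs n 0 = 0" unfolding Fs_def by simp
lemma Ws_0: "Ws 0 = 0" unfolding Ws_def by simp

lemma aa_lim: "aa \<longlonglongrightarrow> 0"
  unfolding aa_def by (rule LIMSEQ_power_zero) simp

lemma Fs_lim: "(\<lambda>n. Fs n x) \<longlonglongrightarrow> Ws x"
  unfolding Fs_def Ws_def by (rule summable_LIMSEQ[OF term_summable])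

lemma Ws_cont: "continuous_on S Ws"
proof (rule uniform_limit_theorem[where f = Fs and F = sequentially])
  show "\<forall>\<^sub>F n in sequentially. continuous_on S (Fs n)"
    using deriv_cont[OF Fs_deriv] by simp
  show "uniform_limit S Fs Ws sequentially"
  proof (rule uniform_limitI)
    fix e :: real assume e: "e > 0"
    have "eventually (\<lambda>n. 2 * aa n < e) sequentially"
    proof -
      have "(\<lambda>n. 2 * aa n) \<longlonglongrightarrow> 2 * 0" by (intro tendsto_intros aa_lim)
      then show ?thesis using e by (auto simp: order_tendsto_iff)
    qed
    then show "\<forall>\<^sub>F n in sequentially. \<forall>x\<in>S. dist (Fs n x) (Ws x) < e"
    proof eventually_elim
      case (elim n)
      show ?case
      proof
        fix x assume "x \<in> S"
        have "dist (Fs n x) (Ws x) = \<bar>Ws x - Fs n x\<bar>" by (simp add: dist_real_def abs_minus_commute)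
        then show "dist (Fs n x) (Ws x) < e" using tail_bound[of x n] elim by linarith
      qed
    qed
  qed
qed simp

lemma sin_lip: "\<bar>sin w - sin z\<bar> \<le> \<bar>w - z\<bar>" for w z :: real
proof -
  have "\<bar>sin w - sin z\<bar> = 2 * \<bar>sin ((w - z) / 2)\<bar> * \<bar>cos ((w + z) / 2)\<bar>"
    by (simp add: sin_diff_sin abs_mult)
  also have "\<dots> \<le> 2 * \<bar>(w - z) / 2\<bar> * 1"
    by (intro mult_mono abs_sin_x_le_abs_x) auto
  finally show ?thesis by simp
qed



lemma alg_id:
  fixes s b A B E P Q :: real
  assumes s: "s > 0" and b: "b > 0"
  shows "s^2 * ((E * (- s * P - b * Q) - (- s * A - b * B)) / (s^2 + b^2) - A * ((1 - E) / s))
   = s * b * (s * B - b * A) / (s^2 + b^2) + (s^2 * E * (- s * P - b * Q) / (s^2 + b^2) + s * A * E)"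
proof -
  have D: "s^2 + b^2 \<noteq> 0" using s b by (smt (verit) zero_less_power2 )
  show ?thesis using D s by (simp add: divide_simps) (simp add: algebra_simps power2_eq_square)
qed

lemma sin_lap_formula:
  fixes s b d x :: real
  assumes s: "s > 0" and b: "b > 0" and d: "d \<ge> 0"
  shows "lap_right (\<lambda>y. sin (b * y)) x d s = s * b * (s * cos (b * x) - b * sin (b * x)) / (s^2 + b^2)
     + (s^2 * exp (- s * d) * (- s * sin (b * (x + d)) - b * cos (b * (x + d))) / (s^2 + b^2) + s * sin (b * x) * exp (- s * d))"
proof -
  define G where "G = (\<lambda>t. exp (- s * t) * (- s * sin (b * (x + t)) - b * cos (b * (x + t))))"
  have sb: "s^2 + b^2 > 0" using s b by (simp add: add_pos_pos)
  have "((\<lambda>t. (s^2 + b^2) * (exp (- s * t) * sin (b * (x + t)))) has_integral G d - G 0) {0..d}"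
  proof (rule fundamental_theorem_of_calculus)
    show "0 \<le> d" by (rule d)
    fix t assume "t \<in> {0..d}"
    have "(G has_real_derivative ((s^2 + b^2) * (exp (- s * t) * sin (b * (x + t))))) (at t within {0..d})"
      unfolding G_def by (auto intro!: derivative_eq_intros simp: algebra_simps power2_eq_square)
    then show "(G has_vector_derivative ((s^2 + b^2) * (exp (- s * t) * sin (b * (x + t))))) (at t within {0..d})"
      by (simp add: has_real_derivative_iff_has_vector_derivative)
  qed
  then have "((\<lambda>t. (1 / (s^2 + b^2)) * ((s^2 + b^2) * (exp (- s * t) * sin (b * (x + t))))) has_integral (1 / (s^2 + b^2)) * (G d - G 0)) {0..d}"
    by (rule has_integral_mult_right)
  then have I1: "((\<lambda>t. exp (- s * t) * sin (b * (x + t))) has_integral (G d - G 0) / (s^2 + b^2)) {0..d}"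
    using sb s by simp
  have I0: "((\<lambda>t. sin (b * x) * exp (- s * t)) has_integral sin (b * x) * ((1 - exp (- s * d)) / s)) {0..d}"
    by (rule has_integral_mult_right[OF K0[OF s d]])
  have "((\<lambda>t. exp (- s * t) * sin (b * (x + t)) - sin (b * x) * exp (- s * t)) has_integral
      (G d - G 0) / (s^2 + b^2) - sin (b * x) * ((1 - exp (- s * d)) / s)) {0..d}"
    by (rule has_integral_diff[OF I1 I0])
  then have I: "integral {0..d} (\<lambda>t. exp (- s * t) * (sin (b * (x + t)) - sin (b * x))) = (G d - G 0) / (s^2 + b^2) - sin (b * x) * ((1 - exp (- s * d)) / s)"
    by (simp add: algebra_simps integral_unique)
  have "lap_right (\<lambda>y. sin (b * y)) x d s = s^2 * ((exp (- s * d) * (- s * sin (b * (x + d)) - b * cos (b * (x + d))) - (- s * sin (b * x) - b * cos (b * x))) / (s^2 + b^2) - sin (b * x) * ((1 - exp (- s * d)) / s))"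
    unfolding lap_right_def I unfolding G_def by simp
  then show ?thesis using alg_id[OF s b, of "exp (- s * d)" "sin (b * (x + d))" "cos (b * (x + d))" "sin (b * x)" "cos (b * x)"] by simp
qed

lemma rem_bound:
  fixes s b d x :: real
  assumes s: "s > 0" and b: "b > 0"
  shows "\<bar>s^2 * exp (- s * d) * (- s * sin (b * (x + d)) - b * cos (b * (x + d))) / (s^2 + b^2) + s * sin (b * x) * exp (- s * d)\<bar>
     \<le> exp (- s * d) * (2 * s + b)"
proof -
  have sb: "s^2 + b^2 > 0" using s b by (simp add: add_pos_pos)
  have q: "s^2 / (s^2 + b^2) \<le> 1" using sb by simp
  have h1: "\<bar>- s * sin (b * (x + d)) - b * cos (b * (x + d))\<bar> \<le> s + b"
  proof -
    have "\<bar>- s * sin (b * (x + d)) - b * cos (b * (x + d))\<bar> \<le> s * \<bar>sin (b * (x + d))\<bar> + b * \<bar>cos (b * (x + d))\<bar>"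
      using abs_triangle_ineq4[of "- s * sin (b * (x + d))" "b * cos (b * (x + d))"] s b by (simp add: abs_mult)
    also have "\<dots> \<le> s * 1 + b * 1" using s b by (intro add_mono mult_left_mono) auto
    finally show ?thesis by simp
  qed
  have "\<bar>s^2 * exp (- s * d) * (- s * sin (b * (x + d)) - b * cos (b * (x + d))) / (s^2 + b^2)\<bar>
      = exp (- s * d) * (s^2 / (s^2 + b^2)) * \<bar>- s * sin (b * (x + d)) - b * cos (b * (x + d))\<bar>"
    using sb by (simp add: abs_mult abs_div)
  also have "\<dots> \<le> exp (- s * d) * 1 * (s + b)"
    using q h1 sb by (intro mult_mono) auto
  finally have A: "\<bar>s^2 * exp (- s * d) * (- s * sin (b * (x + d)) - b * cos (b * (x + d))) / (s^2 + b^2)\<bar> \<le> exp (- s * d) * (s + b)" by simp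
  have B: "\<bar>s * sin (b * x) * exp (- s * d)\<bar> \<le> exp (- s * d) * s"
    using s by (simp add: abs_mult mult_left_le)
  have "\<bar>s^2 * exp (- s * d) * (- s * sin (b * (x + d)) - b * cos (b * (x + d))) / (s^2 + b^2) + s * sin (b * x) * exp (- s * d)\<bar>
     \<le> \<bar>s^2 * exp (- s * d) * (- s * sin (b * (x + d)) - b * cos (b * (x + d))) / (s^2 + b^2)\<bar> + \<bar>s * sin (b * x) * exp (- s * d)\<bar>"
    by (rule abs_triangle_ineq)
  also have "\<dots> \<le> exp (- s * d) * (s + b) + exp (- s * d) * s" using A B by (rule add_mono)
  finally show ?thesis by (simp add: algebra_simps)
qed

lemma lap_lip:
  fixes F :: "real \<Rightarrow> real"
  assumes cont: "continuous_on {x..x+d} F" and s: "s > 0" and d: "d \<ge> 0" and L: "L \<ge> 0"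
    and lip: "\<And>t. t \<in> {0..d} \<Longrightarrow> \<bar>F (x + t) - F x\<bar> \<le> L * t"
  shows "\<bar>lap_right F x d s\<bar> \<le> L"
proof -
  have "\<bar>s^2 * integral {0..d} (\<lambda>t. exp (- s * t) * (F (x + t) - F x))\<bar> \<le> 0 * s + L + 2 * 0 / s"
    using lip L by (intro bnd_gen continuous_intros cont_shift_r cont s d) auto
  then show ?thesis unfolding lap_right_def by simp
qed

lemma lap_bdd:
  fixes F :: "real \<Rightarrow> real"
  assumes cont: "continuous_on {x..x+d} F" and s: "s > 0" and d: "d \<ge> 0" and C: "C \<ge> 0"
    and bd: "\<And>y. \<bar>F y\<bar> \<le> C"
  shows "\<bar>lap_right F x d s\<bar> \<le> 2 * C * s"
proof -
  have "\<bar>s^2 * integral {0..d} (\<lambda>t. exp (- s * t) * (F (x + t) - F x))\<bar> \<le> (2 * C) * s + 0 + 2 * 0 / s"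
  proof (intro bnd_gen continuous_intros cont_shift_r cont s d)
    fix t show "\<bar>F (x + t) - F x\<bar> \<le> 2 * C + 0 * t + 0 * t^2"
      using bd[of "x + t"] bd[of x] by simp
  qed (use C in auto)
  then show ?thesis unfolding lap_right_def by simp
qed

lemma Fs_lip: "\<bar>Fs k y - Fs k z\<bar> \<le> (\<Sum>j<k. aa j * bb j) * \<bar>y - z\<bar>"
proof -
  have "\<bar>Fs k y - Fs k z\<bar> = \<bar>\<Sum>j<k. aa j * (sin (bb j * y) - sin (bb j * z))\<bar>"
    unfolding Fs_def by (simp add: sum_subtractf[symmetric] algebra_simps)
  also have "\<dots> \<le> (\<Sum>j<k. \<bar>aa j * (sin (bb j * y) - sin (bb j * z))\<bar>)" by (rule sum_abs)
  also have "\<dots> \<le> (\<Sum>j<k. aa j * bb j * \<bar>y - z\<bar>)"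
  proof (rule sum_mono)
    fix j
    have "\<bar>sin (bb j * y) - sin (bb j * z)\<bar> \<le> \<bar>bb j * y - bb j * z\<bar>" by (rule sin_lip)
    also have "\<dots> = bb j * \<bar>y - z\<bar>" using bb_pos[of j] by (simp add: abs_mult right_diff_distrib[symmetric])
    finally have "\<bar>sin (bb j * y) - sin (bb j * z)\<bar> \<le> bb j * \<bar>y - z\<bar>" .
    then show "\<bar>aa j * (sin (bb j * y) - sin (bb j * z))\<bar> \<le> aa j * bb j * \<bar>y - z\<bar>"
      using aa_pos[of j] by (simp add: abs_mult mult.assoc mult_left_mono)
  qed
  also have "\<dots> = (\<Sum>j<k. aa j * bb j) * \<bar>y - z\<bar>" by (simp add: sum_distrib_right)
  finally show ?thesis .
qed

lemma sum100: "(\<Sum>j<k. aa j * bb j) \<le> 100^k / 99"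
proof -
  have "(\<Sum>j<k. aa j * bb j) = (\<Sum>j<k. (100::real)^j)" by (simp add: aabb)
  also have "\<dots> = (100^k - 1) / 99" by (induction k) (simp_all add: field_simps)
  also have "\<dots> \<le> 100^k / 99" by (simp add: divide_right_mono)
  finally show ?thesis .
qed

lemma m_bound:
  fixes y :: real
  shows "\<bar>1 * (1 * cos y - sin y) / (1^2 + 1)\<bar> \<ge> 1/10 \<or> \<bar>2 * (2 * cos y - sin y) / (2^2 + 1)\<bar> \<ge> 1/10"
proof (rule ccontr)
  assume "\<not> ?thesis"
  then have h1: "\<bar>cos y - sin y\<bar> < 1/5" and h2: "\<bar>4 * cos y - 2 * sin y\<bar> < 1/2" by auto
  have c: "\<bar>cos y\<bar> < 9/20" using h1 h2 by (auto simp: abs_real_def split: if_splits)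
  have sn: "\<bar>sin y\<bar> < 13/20" using h1 c by (auto simp: abs_real_def split: if_splits)
  have "(cos y)^2 < (9/20)^2" using c by (metis abs_ge_zero power2_abs power_strict_mono zero_less_numeral pos2)
  then have a: "(cos y)^2 < 81/400" by (simp add: power2_eq_square)
  have "(sin y)^2 < (13/20)^2" using sn by (metis abs_ge_zero power2_abs power_strict_mono zero_less_numeral pos2)
  then have b: "(sin y)^2 < 169/400" by (simp add: power2_eq_square)
  show False using a b sin_cos_squared_add[of y] by linarith
qed



lemma M_identity:
  fixes b \<sigma> C S :: real
  assumes b: "b > 0" and sg: "\<sigma> > 0"
  shows "(\<sigma> * b) * b * ((\<sigma> * b) * C - b * S) / ((\<sigma> * b)^2 + b^2) = b * (\<sigma> * (\<sigma> * C - S) / (\<sigma>^2 + 1))"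
proof -
  have e1: "(\<sigma> * b)^2 + b^2 = b^2 * (\<sigma>^2 + 1)" by (simp add: algebra_simps power2_eq_square)
  have e2: "(\<sigma> * b) * b * ((\<sigma> * b) * C - b * S) = b^2 * (b * (\<sigma> * (\<sigma> * C - S)))" by (simp add: algebra_simps power2_eq_square)
  have "b^2 > 0" using b by simp
  then show ?thesis unfolding e1 e2 by simp
qed

lemma abs_comb:
  fixes X Y R Z P :: real
  assumes "\<bar>X\<bar> \<le> P / 99" "\<bar>Z\<bar> \<le> 8 * P / 1000" "\<bar>R\<bar> \<le> P / 100" "\<bar>Y\<bar> \<ge> P / 10"
  shows "P / 20 \<le> \<bar>X + (Y + R) + Z\<bar>"
  using assms by (auto simp: abs_real_def split: if_splits)

lemma W_key:
  assumes d: "d > 0" and sg: "\<sigma> = 1 \<or> \<sigma> = 2"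
    and m: "\<bar>\<sigma> * (\<sigma> * cos (bb k * x) - sin (bb k * x)) / (\<sigma>^2 + 1)\<bar> \<ge> 1/10"
    and ex: "exp (- bb k * d) \<le> 1/500"
  shows "\<bar>lap_right Ws x d (\<sigma> * bb k)\<bar> \<ge> 100^k / 20"
proof -
  define b where "b = bb k"
  define s where "s = \<sigma> * b"
  define P :: real where "P = 100^k"
  have b: "b > 0" unfolding b_def by (rule bb_pos)
  have sg0: "\<sigma> > 0" "\<sigma> \<le> 2" "\<sigma> \<ge> 1" using sg by auto
  have s: "s > 0" "b \<le> s" "s \<le> 2 * b" unfolding s_def using b sg0 by auto
  have P: "P > 0" "aa k * b = P" unfolding P_def b_def by (auto simp: aabb)
  define T where "T = (\<lambda>y. Ws y - Fs (Suc k) y)"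
  have Fsc: "continuous_on S (Fs k)" for S using deriv_cont[OF Fs_deriv] by blast
  have Wc: "continuous_on S Ws" for S by (rule Ws_cont)
  have Tc: "continuous_on S T" for S unfolding T_def using deriv_cont[OF Fs_deriv] Wc by (intro continuous_intros) blast+
  have sinc: "continuous_on S (\<lambda>y. aa k * sin (b * y))" for S by (intro continuous_intros)
  have Weq: "Ws = (\<lambda>y. (Fs k y + aa k * sin (b * y)) + T y)"
    unfolding T_def Fs_def b_def by (auto simp: fun_eq_iff)
  have "lap_right Ws x d s = lap_right (\<lambda>y. Fs k y + aa k * sin (b * y)) x d s + lap_right T x d s"
    unfolding Weq by (intro lap_right_add continuous_intros Fsc Tc)
  also have "\<dots> = lap_right (Fs k) x d s + aa k * lap_right (\<lambda>y. sin (b * y)) x d s + lap_right T x d s"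
    using lap_right_add[OF Fsc sinc] lap_right_cmult[of "aa k" "\<lambda>y. sin (b * y)"] by simp
  finally have split: "lap_right Ws x d s = lap_right (Fs k) x d s + aa k * lap_right (\<lambda>y. sin (b * y)) x d s + lap_right T x d s" .
  have X: "\<bar>lap_right (Fs k) x d s\<bar> \<le> P / 99"
  proof -
    have "\<bar>lap_right (Fs k) x d s\<bar> \<le> (\<Sum>j<k. aa j * bb j)"
    proof (rule lap_lip[OF Fsc s(1)])
      show "0 \<le> d" using d by simp
      show "0 \<le> (\<Sum>j<k. aa j * bb j)" using aa_pos bb_pos by (intro sum_nonneg) (simp add: less_imp_le)
      fix t :: real assume "t \<in> {0..d}"
      then show "\<bar>Fs k (x + t) - Fs k x\<bar> \<le> (\<Sum>j<k. aa j * bb j) * t" using Fs_lip[of k "x + t" x] by simp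
    qed
    then show ?thesis using sum100[of k] unfolding P_def by linarith
  qed
  have Z: "\<bar>lap_right T x d s\<bar> \<le> 8 * P / 1000"
  proof -
    have Tb: "\<bar>T y\<bar> \<le> 2 * aa (Suc k)" for y unfolding T_def by (rule tail_bound)
    have "\<bar>lap_right T x d s\<bar> \<le> 2 * (2 * aa (Suc k)) * s"
      using d aa_pos[of "Suc k"] by (intro lap_bdd Tc s(1) Tb) auto
    also have "\<dots> \<le> 2 * (2 * aa (Suc k)) * (2 * b)" using s aa_pos[of "Suc k"] by (intro mult_left_mono) auto
    also have "\<dots> = 8 * (aa k * b) / 1000" by (simp add: aa_def)
    finally show ?thesis using P by simp
  qed
  define m where "m = \<sigma> * (\<sigma> * cos (b * x) - sin (b * x)) / (\<sigma>^2 + 1)"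
  define Rm where "Rm = s^2 * exp (- s * d) * (- s * sin (b * (x + d)) - b * cos (b * (x + d))) / (s^2 + b^2) + s * sin (b * x) * exp (- s * d)"
  have Yf: "lap_right (\<lambda>y. sin (b * y)) x d s = b * m + Rm"
    unfolding Rm_def m_def using sin_lap_formula[OF s(1) b, of d x] d M_identity[OF b sg0(1), of "cos (b * x)" "sin (b * x)"]
    unfolding s_def by simp
  have Rb: "\<bar>Rm\<bar> \<le> b / 100"
  proof -
    have "\<bar>Rm\<bar> \<le> exp (- s * d) * (2 * s + b)" unfolding Rm_def by (rule rem_bound[OF s(1) b])
    also have "\<dots> \<le> exp (- b * d) * (5 * b)"
    proof (intro mult_mono)
      show "exp (- s * d) \<le> exp (- b * d)" using s d by (simp add: mult_right_mono)
    qed (use s b in auto)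
    also have "\<dots> \<le> (1/500) * (5 * b)" using ex b unfolding b_def by (intro mult_right_mono) auto
    finally show ?thesis by simp
  qed
  have mb: "\<bar>m\<bar> \<ge> 1/10" using m unfolding m_def b_def .
  have Y1: "aa k * lap_right (\<lambda>y. sin (b * y)) x d s = P * m + aa k * Rm"
    unfolding Yf using P by (simp add: algebra_simps)
  have Y2: "\<bar>aa k * Rm\<bar> \<le> P / 100"
  proof -
    have "\<bar>aa k * Rm\<bar> = aa k * \<bar>Rm\<bar>" using aa_pos[of k] by (simp add: abs_mult)
    also have "\<dots> \<le> aa k * (b / 100)" using Rb aa_pos[of k] by (intro mult_left_mono) auto
    also have "\<dots> = P / 100" using P by simp
    finally show ?thesis .
  qed
  have Pm: "\<bar>P * m\<bar> \<ge> P / 10" using mb P by (simp add: abs_mult)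
  have "\<bar>lap_right Ws x d s\<bar> \<ge> P / 20"
    unfolding split Y1 using abs_comb[OF X Z Y2 Pm] by simp
  then show ?thesis unfolding s_def b_def P_def .
qed



lemma pow_ev:
  fixes x :: real
  assumes "1 < x"
  shows "eventually (\<lambda>k. Z < x^k) sequentially"
proof -
  obtain n where n: "Z < x^n" using real_arch_pow[OF assms] by blast
  show ?thesis unfolding eventually_sequentially
  proof (intro exI[of _ n] allI impI)
    fix k assume "n \<le> k"
    then have "x^n \<le> x^k" using assms by (intro power_increasing) auto
    then show "Z < x^k" using n by simp
  qed
qed

lemma W_unbounded:
  assumes d: "d > 0"
  shows "\<exists>s\<ge>S. \<bar>lap_right Ws x d s\<bar> > B"
proof -
  have e1: "eventually (\<lambda>k. 20 * B < (100::real)^k) sequentially" by (rule pow_ev) simp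
  have e2: "eventually (\<lambda>k. max S (ln 500 / d) < bb k) sequentially" unfolding bb_def by (rule pow_ev) simp
  obtain k where k: "20 * B < 100^k" "max S (ln 500 / d) < bb k"
    using eventually_happens'[OF _ eventually_conj[OF e1 e2]] by auto
  have "ln 500 < bb k * d" using k(2) d by (simp add: divide_less_eq)
  then have "exp (- bb k * d) < exp (- ln 500)" by simp
  then have ex: "exp (- bb k * d) \<le> 1/500" by (simp add: exp_minus)
  have bS: "bb k \<ge> S" using k(2) by simp
  from m_bound[of "bb k * x"] show ?thesis
  proof
    assume m: "\<bar>1 * (1 * cos (bb k * x) - sin (bb k * x)) / (1^2 + 1)\<bar> \<ge> 1/10"
    have "\<bar>lap_right Ws x d (1 * bb k)\<bar> \<ge> 100^k / 20" by (rule W_key[OF d _ m ex]) simp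
    then show ?thesis using k bS by (intro exI[of _ "1 * bb k"]) auto
  next
    assume m: "\<bar>2 * (2 * cos (bb k * x) - sin (bb k * x)) / (2^2 + 1)\<bar> \<ge> 1/10"
    have "\<bar>lap_right Ws x d (2 * bb k)\<bar> \<ge> 100^k / 20" by (rule W_key[OF d _ m ex]) simp
    then show ?thesis using k bS bb_pos[of k] by (intro exI[of _ "2 * bb k"]) auto
  qed
qed



lemma deriv_LP:
  assumes x: "0 < x" and der: "\<And>y. (F has_real_derivative f y) (at y)"
  shows "LP_integrable 0 x f" "LP_integral 0 x f = F x - F 0"
  using LP_exact[OF x deriv_major_minor[OF x der]] by auto

lemma alex_le:
  assumes "\<And>x. x \<in> {0<..1} \<Longrightarrow> \<bar>LP_integral 0 x h\<bar> \<le> B" "B \<ge> 0"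
  shows "alex_norm 0 1 h \<le> B"
  unfolding alex_norm_def
  by (rule cSUP_least) (use assms in auto)

lemma alex_ge:
  assumes C: "\<And>x. x \<in> {0<..1} \<Longrightarrow> \<bar>LP_integral 0 x h\<bar> \<le> C" and x: "x \<in> {0<..1}"
  shows "\<bar>LP_integral 0 x h\<bar> \<le> alex_norm 0 1 h"
proof -
  have bdd: "bdd_above ((\<lambda>x. if x = 0 then 0 else \<bar>LP_integral 0 x h\<bar>) ` {0..1})"
    by (rule bdd_aboveI2[of _ _ "max C 0"]) (use C in \<open>auto simp: le_max_iff_disj\<close>)
  have "(if x = 0 then 0 else \<bar>LP_integral 0 x h\<bar>) \<le> alex_norm 0 1 h"
    unfolding alex_norm_def by (rule cSUP_upper[OF _ bdd]) (use x in auto)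
  then show ?thesis using x by simp
qed

lemma aa_mono: "N \<le> m \<Longrightarrow> aa m \<le> aa N"
  unfolding aa_def by (rule power_decreasing) auto

lemma part1: "LP_integrable 0 1 (fs n)"
  using deriv_LP(1)[of 1 "Fs n" "fs n"] Fs_deriv by auto

lemma part2:
  assumes e: "e > 0"
  shows "\<exists>N. \<forall>m\<ge>N. \<forall>n\<ge>N. alex_norm 0 1 (\<lambda>x. fs m x - fs n x) < e"
proof -
  have "eventually (\<lambda>N. aa N < e / 4) sequentially"
    by (rule order_tendstoD(2)[OF aa_lim]) (use e in simp)
  then obtain N where N: "aa N < e / 4" by (auto simp: eventually_sequentially)
  have "alex_norm 0 1 (\<lambda>x. fs m x - fs n x) < e" if mn: "m \<ge> N" "n \<ge> N" for m n
  proof -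
    have der: "((\<lambda>y. Fs m y - Fs n y) has_real_derivative fs m y - fs n y) (at y)" for y
      by (intro derivative_intros Fs_deriv)
    have "alex_norm 0 1 (\<lambda>x. fs m x - fs n x) \<le> 4 * aa N"
    proof (rule alex_le)
      fix x :: real assume x: "x \<in> {0<..1}"
      have "LP_integral 0 x (\<lambda>x. fs m x - fs n x) = (Fs m x - Fs n x) - (Fs m 0 - Fs n 0)"
        using deriv_LP(2)[OF _ der] x by auto
      also have "\<dots> = (Fs m x - Ws x) + (Ws x - Fs n x)" by (simp add: Fs_0)
      finally have eq: "LP_integral 0 x (\<lambda>x. fs m x - fs n x) = (Fs m x - Ws x) + (Ws x - Fs n x)" .
      have "\<bar>Fs m x - Ws x\<bar> \<le> 2 * aa N" using tail_bound[of x m] aa_mono[OF mn(1)] by (simp add: abs_minus_commute)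
      moreover have "\<bar>Ws x - Fs n x\<bar> \<le> 2 * aa N" using tail_bound[of x n] aa_mono[OF mn(2)] by simp
      ultimately show "\<bar>LP_integral 0 x (\<lambda>x. fs m x - fs n x)\<bar> \<le> 4 * aa N" unfolding eq by linarith
    qed (use aa_pos in \<open>simp add: less_imp_le\<close>)
    then show ?thesis using N by linarith
  qed
  then show ?thesis by blast
qed



lemma sandwich:
  assumes lim: "(\<lambda>n. alex_norm 0 1 (\<lambda>x. fs n x - g x)) \<longlonglongrightarrow> 0"
    and U: "major_fun 0 1 g U" and V: "minor_fun 0 1 g V" and x: "x \<in> {0..1}"
  shows "V x - V 0 \<le> Ws x \<and> Ws x \<le> U x - U 0"
proof (cases "x = 0")
  case True then show ?thesis by (simp add: Ws_0)
next
  case False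
  then have x': "x \<in> {0<..1}" using x by auto
  have Uc: "continuous_on {0..1} U" and Vc: "continuous_on {0..1} V"
    using U V unfolding major_fun_def minor_fun_def by auto
  have bnds: "(Fs n z - U z) - (Fs n 0 - U 0) \<le> LP_integral 0 z (\<lambda>y. fs n y - g y)
      \<and> LP_integral 0 z (\<lambda>y. fs n y - g y) \<le> (Fs n z - V z) - (Fs n 0 - V 0)" if z: "z \<in> {0<..1}" for n z
  proof -
    have z1: "0 < z" "z \<le> 1" using z by auto
    have Mj: "major_fun 0 z (\<lambda>y. fs n y - g y) (\<lambda>y. Fs n y - V y)" by (rule restrict_major[OF z1 Fs_deriv V])
    have Mn: "minor_fun 0 z (\<lambda>y. fs n y - g y) (\<lambda>y. Fs n y - U y)" by (rule restrict_minor[OF z1 Fs_deriv U])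
    from LP_integral_bounds[OF z1(1) Mj Mn] show ?thesis by simp
  qed
  have an: "\<bar>LP_integral 0 x (\<lambda>y. fs n y - g y)\<bar> \<le> alex_norm 0 1 (\<lambda>x. fs n x - g x)" for n
  proof -
    have Fc: "continuous_on S (Fs n)" for S using deriv_cont[OF Fs_deriv] by blast
    have "continuous_on {0..1} (\<lambda>z. \<bar>(Fs n z - U z) - (Fs n 0 - U 0)\<bar> + \<bar>(Fs n z - V z) - (Fs n 0 - V 0)\<bar>)"
      by (intro continuous_intros Fc Uc Vc)
    then obtain C where C: "\<forall>z\<in>{0..1}. \<bar>\<bar>(Fs n z - U z) - (Fs n 0 - U 0)\<bar> + \<bar>(Fs n z - V z) - (Fs n 0 - V 0)\<bar>\<bar> \<le> C"
      using cont_bound by blast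
    show ?thesis
    proof (rule alex_ge[OF _ x'])
      fix z :: real assume z: "z \<in> {0<..1}"
      have "\<bar>LP_integral 0 z (\<lambda>y. fs n y - g y)\<bar> \<le> \<bar>(Fs n z - U z) - (Fs n 0 - U 0)\<bar> + \<bar>(Fs n z - V z) - (Fs n 0 - V 0)\<bar>"
        using bnds[OF z, of n] by (auto simp: abs_real_def split: if_splits)
      also have "\<dots> \<le> C" using C z by auto
      finally show "\<bar>LP_integral 0 z (\<lambda>y. fs n y - g y)\<bar> \<le> C" .
    qed
  qed
  have l1: "(\<lambda>n. Fs n x - (U x - U 0)) \<longlonglongrightarrow> Ws x - (U x - U 0)" by (intro tendsto_intros Fs_lim)
  have l2: "(\<lambda>n. Fs n x - (V x - V 0)) \<longlonglongrightarrow> Ws x - (V x - V 0)" by (intro tendsto_intros Fs_lim)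
  have lm: "(\<lambda>n. - alex_norm 0 1 (\<lambda>x. fs n x - g x)) \<longlonglongrightarrow> - 0" by (intro tendsto_intros lim)
  have "Ws x - (U x - U 0) \<le> 0"
  proof (rule tendsto_le[OF _ lim l1])
    show "\<forall>\<^sub>F n in sequentially. Fs n x - (U x - U 0) \<le> alex_norm 0 1 (\<lambda>x. fs n x - g x)"
      using bnds[OF x'] an by (intro always_eventually allI) (smt (verit) Fs_0)
  qed simp
  moreover have "- 0 \<le> Ws x - (V x - V 0)"
  proof (rule tendsto_le[OF _ l2 lm])
    show "\<forall>\<^sub>F n in sequentially. - alex_norm 0 1 (\<lambda>x. fs n x - g x) \<le> Fs n x - (V x - V 0)"
      using bnds[OF x'] an by (intro always_eventually allI) (smt (verit) Fs_0)
  qed simp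
  ultimately show ?thesis by simp
qed

lemma approx:
  assumes g: "LP_integrable 0 1 g" and e: "e > 0"
  shows "\<exists>U V. major_fun 0 1 g U \<and> minor_fun 0 1 g V \<and> (U 1 - U 0) - (V 1 - V 0) < e"
proof -
  obtain L where L: "lap_upper 0 1 g = ereal L" "lap_lower 0 1 g = ereal L"
    using g unfolding LP_integrable_def by (cases "lap_upper 0 1 g") auto
  have "(INF U\<in>{U. major_fun 0 1 g U}. ereal (U 1 - U 0)) < ereal (L + e/2)"
    using L(1) e unfolding lap_upper_def by simp
  then obtain U where U: "major_fun 0 1 g U" "U 1 - U 0 < L + e/2" by (auto simp: INF_less_iff)
  have "ereal (L - e/2) < (SUP V\<in>{V. minor_fun 0 1 g V}. ereal (V 1 - V 0))"
    using L(2) e unfolding lap_lower_def by simp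
  then obtain V where V: "minor_fun 0 1 g V" "L - e/2 < V 1 - V 0" by (auto simp: less_SUP_iff)
  show ?thesis using U V by (intro exI[of _ U] exI[of _ V]) auto
qed



lemma monoMN:
  assumes g: "LP_integrable 0 1 g" and lim: "(\<lambda>n. alex_norm 0 1 (\<lambda>x. fs n x - g x)) \<longlonglongrightarrow> 0"
    and U: "major_fun 0 1 g U" and V: "minor_fun 0 1 g V" and yz: "0 \<le> y" "y \<le> z" "z \<le> 1"
  shows "U y - Ws y \<le> U z - Ws z" "Ws y - V y \<le> Ws z - V z"
proof -
  have A: "Ws z - Ws y \<le> U z - U y + e \<and> V z - V y - e \<le> Ws z - Ws y" if e: "e > 0" for e
  proof -
    obtain U1 V1 where U1: "major_fun 0 1 g U1" and V1: "minor_fun 0 1 g V1"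
      and gap: "(U1 1 - U1 0) - (V1 1 - V1 0) < e" using approx[OF g e] by blast
    have sz: "V1 z - V1 0 \<le> Ws z \<and> Ws z \<le> U1 z - U1 0" using yz by (intro sandwich[OF lim U1 V1]) auto
    have sy: "V1 y - V1 0 \<le> Ws y \<and> Ws y \<le> U1 y - U1 0" using yz by (intro sandwich[OF lim U1 V1]) auto
    have m1: "U1 z - V1 z \<le> U1 1 - V1 1" using yz by (intro major_minor_mono[OF _ U1 V1]) auto
    have m2: "U y - V1 y \<le> U z - V1 z" using yz by (intro major_minor_mono[OF _ U V1]) auto
    have m3: "U1 y - V y \<le> U1 z - V z" using yz by (intro major_minor_mono[OF _ U1 V]) auto
    show ?thesis using sz sy m1 m2 m3 gap by linarith
  qed
  show "U y - Ws y \<le> U z - Ws z"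
  proof (rule field_le_epsilon)
    fix e :: real assume "0 < e" then show "U y - Ws y \<le> U z - Ws z + e" using A by force
  qed
  show "Ws y - V y \<le> Ws z - V z"
  proof (rule field_le_epsilon)
    fix e :: real assume "0 < e" then show "Ws y - V y \<le> Ws z - V z + e" using A by force
  qed
qed

lemma part3:
  assumes g: "LP_integrable 0 1 g" and lim: "(\<lambda>n. alex_norm 0 1 (\<lambda>x. fs n x - g x)) \<longlonglongrightarrow> 0"
  shows False
proof -
  obtain U0 V0 where U0: "major_fun 0 1 g U0" and V0: "minor_fun 0 1 g V0"
    using approx[OF g, of 1] by auto
  have Uc: "continuous_on {0..1} U0" and Vc: "continuous_on {0..1} V0"
    using U0 V0 unfolding major_fun_def minor_fun_def by auto
  define P where "P = (\<lambda>y. U0 y - V0 y)"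
  define K where "K = \<bar>P 1 - P 0\<bar> + 1"
  have K0: "K \<ge> 0" unfolding K_def by simp
  define \<phi> where "\<phi> = (\<lambda>y. P y - K * y)"
  have \<phi>c: "continuous_on {0..1} \<phi>" unfolding \<phi>_def P_def by (intro continuous_intros Uc Vc)
  have "\<phi> 0 \<le> \<phi> 1"
  proof (rule mono_from_lap[OF \<phi>c])
    fix x :: real assume x: "x \<in> {0..<1}"
    define d where "d = 1 - x"
    have d: "d > 0" "x + d = 1" unfolding d_def using x by auto
    have sub: "{x..x+d} \<subseteq> {0..1}" using x d by auto
    have Ucx: "continuous_on {x..x+d} U0" by (rule continuous_on_subset[OF Uc sub])
    have Vcx: "continuous_on {x..x+d} V0" by (rule continuous_on_subset[OF Vc sub])
    have Wcx: "continuous_on {x..x+d} Ws" by (rule Ws_cont)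
    have "ereal (g x) \<le> lower_LD 0 1 U0 x" using U0 x unfolding major_fun_def by auto
    also have "\<dots> \<le> Liminf at_top (\<lambda>s. ereal (lap_right U0 x d s))" unfolding d_def using x by (intro lowerLD_right) auto
    finally have e1: "eventually (\<lambda>s. lap_right U0 x d s > g x - 1) at_top" by (rule liminf_ev) simp
    have "Limsup at_top (\<lambda>s. ereal (lap_right V0 x d s)) \<le> upper_LD 0 1 V0 x" unfolding d_def using x by (intro upperLD_right) auto
    also have "\<dots> \<le> ereal (g x)" using V0 x unfolding minor_fun_def by auto
    finally have e2: "eventually (\<lambda>s. lap_right V0 x d s < g x + 1) at_top" by (rule limsup_ev) simp
    obtain N0 where N0: "\<forall>s\<ge>N0. lap_right U0 x d s > g x - 1 \<and> lap_right V0 x d s < g x + 1 \<and> s > 0"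
      using eventually_conj[OF eventually_conj[OF e1 e2] eventually_gt_at_top[of 0]]
      unfolding eventually_at_top_linorder by blast
    have "\<forall>S. \<exists>s\<ge>S. lap_right \<phi> x (1 - x) s \<ge> 1"
    proof
      fix S :: real
      obtain s where s: "s \<ge> max S N0" "\<bar>lap_right Ws x d s\<bar> > K + 1 + \<bar>g x\<bar> + 1"
        using W_unbounded[OF d(1)] by blast
      have sN: "lap_right U0 x d s > g x - 1" "lap_right V0 x d s < g x + 1" "s > 0" using N0 s(1) by auto
      have QM: "lap_right (\<lambda>y. U0 y - Ws y) x d s \<ge> 0"
      proof (rule lap_right_nonneg)
        show "continuous_on {x..x+d} (\<lambda>y. U0 y - Ws y)" by (intro continuous_intros Ucx Wcx)
        fix t assume "t \<in> {0..d}"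
        then show "U0 x - Ws x \<le> U0 (x + t) - Ws (x + t)" using x d by (intro monoMN(1)[OF g lim U0 V0]) auto
      qed
      have QN: "lap_right (\<lambda>y. Ws y - V0 y) x d s \<ge> 0"
      proof (rule lap_right_nonneg)
        show "continuous_on {x..x+d} (\<lambda>y. Ws y - V0 y)" by (intro continuous_intros Vcx Wcx)
        fix t assume "t \<in> {0..d}"
        then show "Ws x - V0 x \<le> Ws (x + t) - V0 (x + t)" using x d by (intro monoMN(2)[OF g lim U0 V0]) auto
      qed
      have eM: "lap_right (\<lambda>y. U0 y - Ws y) x d s = lap_right U0 x d s - lap_right Ws x d s" by (rule lap_right_diff[OF Ucx Wcx])
      have eN: "lap_right (\<lambda>y. Ws y - V0 y) x d s = lap_right Ws x d s - lap_right V0 x d s" by (rule lap_right_diff[OF Wcx Vcx])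
      have eP: "lap_right P x d s = lap_right U0 x d s - lap_right V0 x d s" unfolding P_def by (rule lap_right_diff[OF Ucx Vcx])
      have QP: "lap_right P x d s > K + 1"
        using QM QN eM eN eP sN s(2) by (auto simp: abs_real_def split: if_splits)
      have Pc: "continuous_on {x..x+d} P" unfolding P_def by (intro continuous_intros Ucx Vcx)
      have "lap_right \<phi> x d s = lap_right P x d s - lap_right (\<lambda>y. K * y) x d s"
        unfolding \<phi>_def by (rule lap_right_diff[OF Pc]) (intro continuous_intros)
      also have "\<dots> = lap_right P x d s - K * kap s d"
        using lap_right_cmult[of K "\<lambda>y. y"] lap_right_id[OF sN(3), of d x] d by simp
      finally have eq: "lap_right \<phi> x d s = lap_right P x d s - K * kap s d" .
      have "K * kap s d \<le> K * 1" using kap_bounds[OF sN(3), of d] d K0 by (intro mult_left_mono) auto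
      then have "lap_right \<phi> x d s \<ge> 1" using eq QP by linarith
      then show "\<exists>s\<ge>S. lap_right \<phi> x (1 - x) s \<ge> 1" using s(1) unfolding d_def by (intro exI[of _ s]) auto
    qed
    then show "\<exists>c>0. \<forall>S. \<exists>s\<ge>S. lap_right \<phi> x (1 - x) s \<ge> c" by (intro exI[of _ 1]) auto
  qed auto
  then have "P 0 \<le> P 1 - K" unfolding \<phi>_def by simp
  then show False unfolding K_def by (auto simp: abs_real_def split: if_splits)
qed


theorem theorem5p10:
  shows "\<exists>f :: nat \<Rightarrow> real \<Rightarrow> real.
           (\<forall>n. LP_integrable 0 1 (f n)) \<and>
           (\<forall>e>0. \<exists>N. \<forall>m\<ge>N. \<forall>n\<ge>N. alex_norm 0 1 (\<lambda>x. f m x - f n x) < e) \<and>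
           \<not> (\<exists>g. LP_integrable 0 1 g \<and>
                 (\<lambda>n. alex_norm 0 1 (\<lambda>x. f n x - g x)) \<longlonglongrightarrow> 0)"
proof (intro exI[of _ fs] conjI allI impI)
  show "LP_integrable 0 1 (fs n)" for n by (rule part1)
  show "\<exists>N. \<forall>m\<ge>N. \<forall>n\<ge>N. alex_norm 0 1 (\<lambda>x. fs m x - fs n x) < e" if "e > 0" for e
    by (rule part2[OF that])
  show "\<not> (\<exists>g. LP_integrable 0 1 g \<and> (\<lambda>n. alex_norm 0 1 (\<lambda>x. fs n x - g x)) \<longlonglongrightarrow> 0)"
    using part3 by blast
qed

end
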